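(* Let $d\ge2$, $L\in\mathbb{N}$, and let $f:[0,1)^d\to[0,\infty)$ be an $L$-piecewise constant probability density. Let $X_1,X_2,\dots$ be i.i.d. with density $f$ and let $\ell(\{X_1,\dots,X_n\})$ be the length of a longest chain in $\{X_1,\dots,X_n\}$. Then \[\liminf_{n\to\infty}n^{-1/d}\ell(\{X_1,\dots,X_n\})\ge c_d\bar J\quad\text{almost surely.}\]
   Context: $x\leqq y$ means $x_i\le y_i$ for all $i$; a chain is a subset totally ordered by $\leqq$. For a multiindex $\alpha$ with integer entries $1\le\alpha_i\le L$, $Q_{L,\alpha}=\{x\in[0,1)^d:\alpha-(1,\dots,1)\leqq Lx<\alpha\}$ (strict inequality componentwise); $f$ is $L$-piecewise constant if it is constant on each $Q_{L,\alpha}$. Extend $f$ by $0$ outside $[0,1)^d$. $\mathcal{A}$ is the set of $\gamma\in C^1([0,1];\mathbb{R}^d)$ with all components of $\gamma'(t)$ nonnegative and $\gamma'(t)\ne0$ for every $t$; $J(\gamma)=\int_0^1 f(\gamma(t))^{1/d}(\gamma_1'(t)\cdots\gamma_d'(t))^{1/d}dt$ and $\bar J=\sup_{\gamma\in\mathcal{A}}J(\gamma)$. $c_d$ is the positive constant such that, for i.i.d. uniform points on $[0,1]^d$, $n^{-1/d}$ times the length of a longest chain among the first $n$ points converges almost surely to $c_d$. *)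

theory Defs
  imports "HOL-Probability.Probability"
begin

definition leqq :: "real^'d \<Rightarrow> real^'d \<Rightarrow> bool" where
  "leqq x y \<longleftrightarrow> (\<forall>i. x $ i \<le> y $ i)"

definition is_chain :: "(real^'d) set \<Rightarrow> bool" where
  "is_chain C \<longleftrightarrow> (\<forall>x\<in>C. \<forall>y\<in>C. leqq x y \<or> leqq y x)"

definition lchain :: "(real^'d) set \<Rightarrow> nat" where
  "lchain S = Max (card ` {C. C \<subseteq> S \<and> is_chain C})"

definition unit_cube :: "(real^'d) set" where
  "unit_cube = {x. \<forall>i. 0 \<le> x $ i \<and> x $ i < 1}"

definition Qcube :: "nat \<Rightarrow> ('d \<Rightarrow> nat) \<Rightarrow> (real^'d) set" where
  "Qcube L \<alpha> = {x \<in> unit_cube. \<forall>i. real (\<alpha> i) - 1 \<le> real L * x $ i \<and> real L * x $ i < real (\<alpha> i)}"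

definition piecewise_const :: "nat \<Rightarrow> (real^'d \<Rightarrow> real) \<Rightarrow> bool" where
  "piecewise_const L f \<longleftrightarrow>
     (\<forall>\<alpha>::'d \<Rightarrow> nat. (\<forall>i. 1 \<le> \<alpha> i \<and> \<alpha> i \<le> L) \<longrightarrow> (\<exists>c. \<forall>x\<in>Qcube L \<alpha>. f x = c))"

definition ext0 :: "(real^'d \<Rightarrow> real) \<Rightarrow> real^'d \<Rightarrow> real" where
  "ext0 f x = (if x \<in> unit_cube then f x else 0)"

definition admissible :: "(real \<Rightarrow> real^'d) \<Rightarrow> bool" where
  "admissible \<gamma> \<longleftrightarrow>
     (\<forall>t\<in>{0..1}. \<gamma> differentiable (at t within {0..1})) \<and>
     continuous_on {0..1} (\<lambda>t. vector_derivative \<gamma> (at t within {0..1})) \<and>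
     (\<forall>t\<in>{0..1}. (\<forall>i. vector_derivative \<gamma> (at t within {0..1}) $ i \<ge> 0) \<and>
                  vector_derivative \<gamma> (at t within {0..1}) \<noteq> 0)"

definition Jfun :: "(real^'d \<Rightarrow> real) \<Rightarrow> (real \<Rightarrow> real^'d) \<Rightarrow> real" where
  "Jfun f \<gamma> = integral {0..1} (\<lambda>t.
      ext0 f (\<gamma> t) powr (1 / real CARD('d)) *
      (\<Prod>i\<in>UNIV. vector_derivative \<gamma> (at t within {0..1}) $ i) powr (1 / real CARD('d)))"

definition Jbar :: "(real^'d \<Rightarrow> real) \<Rightarrow> real" where
  "Jbar f = (SUP \<gamma>\<in>{\<gamma>::real \<Rightarrow> real^'d. admissible \<gamma>}. Jfun f \<gamma>)"

text \<open>Uniform distribution on [0,1]^d and the canonical i.i.d. uniform sequence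
  (coordinate process on the infinite product space).\<close>
definition unif_cube :: "(real^'d) measure" where
  "unif_cube = uniform_measure lborel (cbox 0 1)"

definition is_cd :: "('d::finite) itself \<Rightarrow> real \<Rightarrow> bool" where
  "is_cd _ c \<longleftrightarrow> c > 0 \<and>
     (AE \<omega> in PiM UNIV (\<lambda>_::nat. (unif_cube :: (real^'d) measure)).
        (\<lambda>n. real n powr (- 1 / real CARD('d)) * real (lchain (\<omega> ` {..<n}))) \<longlonglongrightarrow> c)"

end

theory Submission
  imports Defs
begin


lemma chains_finite:
  assumes "finite S"
  shows "finite {C. C \<subseteq> S \<and> is_chain C}"
  using assms by (rule finite_subset[rotated, OF finite_Pow_iff[THEN iffD2]]) auto

lemma lchain_ge:
  assumes "finite S" "C \<subseteq> S" "is_chain C"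
  shows "card C \<le> lchain S"
  unfolding lchain_def using assms chains_finite[OF assms(1)]
  by (intro Max_ge) auto

lemma lchain_obtain:
  assumes "finite S"
  obtains C where "C \<subseteq> S" "is_chain C" "card C = lchain S"
proof -
  have ne: "{C. C \<subseteq> S \<and> is_chain C} \<noteq> {}"
    using is_chain_def by blast
  have "lchain S \<in> card ` {C. C \<subseteq> S \<and> is_chain C}"
    unfolding lchain_def using chains_finite[OF assms] ne by (intro Max_in) auto
  then show ?thesis using that by auto
qed

lemma lchain_mono_map:
  fixes T :: "real^'d \<Rightarrow> real^'e"
  assumes "finite S" "inj_on T S" "\<And>x y. x \<in> S \<Longrightarrow> y \<in> S \<Longrightarrow> leqq x y \<Longrightarrow> leqq (T x) (T y)"
  shows "lchain S \<le> lchain (T ` S)"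
proof -
  obtain C where C: "C \<subseteq> S" "is_chain C" "card C = lchain S" using lchain_obtain[OF assms(1)] by blast
  have "is_chain (T ` C)" using C assms(3) unfolding is_chain_def by blast
  moreover have "card (T ` C) = card C" using C assms(2) by (intro card_image) (auto intro: inj_on_subset)
  moreover have "T ` C \<subseteq> T ` S" using C by blast
  moreover have "finite (T ` S)" using assms(1) by simp
  ultimately show ?thesis using C lchain_ge by metis
qed

lemma lchain_superadd:
  fixes S :: "(real^'d) set" and F :: "nat \<Rightarrow> (real^'d) set"
  assumes "finite S" "finite K" "\<And>k. k \<in> K \<Longrightarrow> F k \<subseteq> S"
    and "\<And>k k' x y. k \<in> K \<Longrightarrow> k' \<in> K \<Longrightarrow> k < k' \<Longrightarrow> x \<in> F k \<Longrightarrow> y \<in> F k' \<Longrightarrow> leqq x y"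
    and "\<And>k k'. k \<in> K \<Longrightarrow> k' \<in> K \<Longrightarrow> k \<noteq> k' \<Longrightarrow> F k \<inter> F k' = {}"
  shows "(\<Sum>k\<in>K. lchain (F k)) \<le> lchain S"
proof -
  have "\<forall>k\<in>K. \<exists>C. C \<subseteq> F k \<and> is_chain C \<and> card C = lchain (F k)"
  proof
    fix k assume "k \<in> K"
    then have "finite (F k)" using assms(1,3) finite_subset by blast
    then obtain C where "C \<subseteq> F k" "is_chain C" "card C = lchain (F k)" by (rule lchain_obtain)
    then show "\<exists>C. C \<subseteq> F k \<and> is_chain C \<and> card C = lchain (F k)" by blast
  qed
  then obtain C where C: "\<And>k. k \<in> K \<Longrightarrow> C k \<subseteq> F k \<and> is_chain (C k) \<and> card (C k) = lchain (F k)"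
    by (metis (no_types))
  have ch: "is_chain (\<Union>k\<in>K. C k)"
    unfolding is_chain_def
  proof (intro ballI)
    fix x y assume "x \<in> (\<Union>k\<in>K. C k)" "y \<in> (\<Union>k\<in>K. C k)"
    then obtain k k' where k: "k \<in> K" "k' \<in> K" "x \<in> C k" "y \<in> C k'" by blast
    show "leqq x y \<or> leqq y x"
    proof (cases "k = k'")
      case True then show ?thesis using C k unfolding is_chain_def by blast
    next
      case False
      then have "k < k' \<or> k' < k" by arith
      then show ?thesis
      proof
        assume "k < k'" then have "leqq x y" using assms(4)[of k k' x y] C k by blast
        then show ?thesis ..
      next
        assume "k' < k" then have "leqq y x" using assms(4)[of k' k y x] C k by blast
        then show ?thesis ..
      qed
    qed
  qed
  have fin: "\<And>k. k \<in> K \<Longrightarrow> finite (C k)" using C assms(1,3) by (meson finite_subset)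
  have "(\<Sum>k\<in>K. lchain (F k)) = (\<Sum>k\<in>K. card (C k))" using C by simp
  also have "\<dots> = card (\<Union>k\<in>K. C k)"
    using assms(2,5) C fin by (intro card_UN_disjoint[symmetric]) blast+
  also have "\<dots> \<le> lchain S"
    using ch C assms by (intro lchain_ge) blast+
  finally show ?thesis .
qed


definition hasHit :: "'a set \<Rightarrow> 'a stream \<Rightarrow> bool" where
  "hasHit B \<omega> \<longleftrightarrow> (\<exists>n. \<omega> !! n \<in> B)"
definition fh :: "'a set \<Rightarrow> 'a stream \<Rightarrow> nat" where
  "fh B \<omega> = (LEAST n. \<omega> !! n \<in> B)"

fun Wk :: "'a set \<Rightarrow> 'a \<Rightarrow> nat \<Rightarrow> 'a stream \<Rightarrow> 'a" where
  "Wk B d0 0 \<omega> = (if hasHit B \<omega> then \<omega> !! fh B \<omega> else d0)"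
| "Wk B d0 (Suc j) \<omega> = (if hasHit B \<omega> then Wk B d0 j (sdrop (Suc (fh B \<omega>)) \<omega>) else d0)"

fun hitE :: "'a set \<Rightarrow> 'a set list \<Rightarrow> 'a stream \<Rightarrow> bool" where
  "hitE B [] \<omega> = True"
| "hitE B (A # As) \<omega> = (\<exists>n. (\<forall>i<n. \<omega> !! i \<notin> B) \<and> \<omega> !! n \<in> A \<and> hitE B As (sdrop (Suc n) \<omega>))"

lemma fh_props:
  assumes "\<omega> !! n \<in> B"
  shows "\<omega> !! fh B \<omega> \<in> B" "fh B \<omega> \<le> n" "\<And>i. i < fh B \<omega> \<Longrightarrow> \<omega> !! i \<notin> B"
  unfolding fh_def using assms by (auto intro: LeastI Least_le dest: not_less_Least)

lemma hitE_W:
  assumes "\<forall>A\<in>set As. A \<subseteq> B" "d0 \<notin> B"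
  shows "hitE B As \<omega> \<longleftrightarrow> (\<forall>j<length As. Wk B d0 j \<omega> \<in> As ! j)"
  using assms(1)
proof (induction As arbitrary: \<omega>)
  case Nil then show ?case by simp
next
  case (Cons A As)
  have AB: "A \<subseteq> B" using Cons.prems by auto
  have IH: "\<And>\<omega>. hitE B As \<omega> \<longleftrightarrow> (\<forall>j<length As. Wk B d0 j \<omega> \<in> As ! j)" using Cons by auto
  have rhs: "(\<forall>j<length (A#As). Wk B d0 j \<omega> \<in> (A#As) ! j) \<longleftrightarrow>
      Wk B d0 0 \<omega> \<in> A \<and> (\<forall>j<length As. Wk B d0 (Suc j) \<omega> \<in> As ! j)"
    by (simp add: All_less_Suc2)
  show ?case
  proof (cases "hasHit B \<omega>")
    case True
    then obtain n where n: "\<omega> !! n \<in> B" unfolding hasHit_def by blast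
    note F = fh_props[OF n]
    have "hitE B (A#As) \<omega> \<longleftrightarrow> \<omega> !! fh B \<omega> \<in> A \<and> hitE B As (sdrop (Suc (fh B \<omega>)) \<omega>)"
    proof
      assume "hitE B (A#As) \<omega>"
      then obtain m where m: "\<forall>i<m. \<omega> !! i \<notin> B" "\<omega> !! m \<in> A" "hitE B As (sdrop (Suc m) \<omega>)" by auto
      have "\<not> m < fh B \<omega>" using m(2) F(3) AB by blast
      moreover have "\<not> fh B \<omega> < m" using m(1) F(1) by blast
      ultimately have "m = fh B \<omega>" by simp
      then show "\<omega> !! fh B \<omega> \<in> A \<and> hitE B As (sdrop (Suc (fh B \<omega>)) \<omega>)" using m by simp
    next
      assume "\<omega> !! fh B \<omega> \<in> A \<and> hitE B As (sdrop (Suc (fh B \<omega>)) \<omega>)"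
      then show "hitE B (A#As) \<omega>" using F(3) by auto
    qed
    then show ?thesis using rhs True IH by simp
  next
    case False
    then have "\<not> hitE B (A#As) \<omega>" using AB unfolding hasHit_def by auto
    moreover have "Wk B d0 0 \<omega> \<notin> A" using False assms(2) AB by auto
    ultimately show ?thesis using rhs by blast
  qed
qed

lemma pred_snth_in: "B \<in> sets M \<Longrightarrow> Measurable.pred (stream_space M) (\<lambda>\<omega>. \<omega> !! n \<in> B)"
  by (rule pred_sets2[OF _ measurable_snth])

lemma meas_hasHit: "B \<in> sets M \<Longrightarrow> Measurable.pred (stream_space M) (hasHit B)"
  unfolding hasHit_def by (intro pred_intros_countable pred_snth_in)

lemma meas_fh: "B \<in> sets M \<Longrightarrow> fh B \<in> stream_space M \<rightarrow>\<^sub>M count_space UNIV"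
  unfolding fh_def by (rule measurable_Least) (rule pred_snth_in)

lemma meas_Wk:
  assumes B: "B \<in> sets M" and d0: "d0 \<in> space M"
  shows "Wk B d0 j \<in> stream_space M \<rightarrow>\<^sub>M M"
proof (induction j)
  case 0
  have m1: "(\<lambda>\<omega>. \<omega> !! fh B \<omega>) \<in> stream_space M \<rightarrow>\<^sub>M M"
    by (rule measurable_compose_countable'[where g="fh B" and I=UNIV]) (auto intro: meas_fh B)
  have eq: "Wk B d0 0 = (\<lambda>\<omega>. if hasHit B \<omega> then \<omega> !! fh B \<omega> else d0)" by (rule ext) simp
  show ?case unfolding eq
    by (rule measurable_If[OF m1 measurable_const[OF d0]]) (use meas_hasHit[OF B] in simp)
next
  case (Suc j)
  have m1: "(\<lambda>\<omega>. Wk B d0 j (sdrop (Suc (fh B \<omega>)) \<omega>)) \<in> stream_space M \<rightarrow>\<^sub>M M"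
    apply (rule measurable_compose_countable'[where g="fh B" and I=UNIV])
    apply (rule measurable_compose[OF measurable_sdrop Suc])
    apply (rule meas_fh[OF B])
    apply simp
    done
  have eq: "Wk B d0 (Suc j) = (\<lambda>\<omega>. if hasHit B \<omega> then Wk B d0 j (sdrop (Suc (fh B \<omega>)) \<omega>) else d0)"
    by (rule ext) simp
  show ?case unfolding eq
    by (rule measurable_If[OF m1 measurable_const[OF d0]]) (use meas_hasHit[OF B] in simp)
qed

lemma meas_hitE:
  assumes B: "B \<in> sets M" and As: "\<forall>A\<in>set As. A \<in> sets M"
  shows "Measurable.pred (stream_space M) (hitE B As)"
  using As
proof (induction As)
  case Nil then show ?case by simp
next
  case (Cons A As)
  then have IH: "Measurable.pred (stream_space M) (hitE B As)" and A: "A \<in> sets M" by auto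
  have [measurable]: "Measurable.pred (stream_space M) (\<lambda>\<omega>. hitE B As (sdrop (Suc n) \<omega>))" for n
    using measurable_compose[OF measurable_sdrop IH] by simp
  have eq: "hitE B (A#As) = (\<lambda>\<omega>. \<exists>n. (\<forall>i<n. \<omega> !! i \<notin> B) \<and> \<omega> !! n \<in> A \<and> hitE B As (sdrop (Suc n) \<omega>))"
    by (rule ext) simp
  have [measurable]: "Measurable.pred (stream_space M) (\<lambda>\<omega>. \<omega> !! n \<in> B)" for n
    using B by (rule pred_snth_in)
  have [measurable]: "Measurable.pred (stream_space M) (\<lambda>\<omega>. \<omega> !! n \<in> A)" for n
    using A by (rule pred_snth_in)
  show ?case unfolding eq by measurable
qed

lemma hitE_Cons_SCons:
  assumes "A \<subseteq> B"
  shows "hitE B (A#As) (x ## s) \<longleftrightarrow> (x \<in> A \<and> hitE B As s) \<or> (x \<notin> B \<and> hitE B (A#As) s)"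
proof
  assume "hitE B (A#As) (x ## s)"
  then obtain n where n: "\<forall>i<n. (x##s) !! i \<notin> B" "(x##s) !! n \<in> A" "hitE B As (sdrop (Suc n) (x##s))"
    by auto
  show "(x \<in> A \<and> hitE B As s) \<or> (x \<notin> B \<and> hitE B (A#As) s)"
  proof (cases n)
    case 0 then show ?thesis using n by simp
  next
    case (Suc m)
    have "\<forall>i<m. s !! i \<notin> B" using n(1) Suc by (auto dest: spec[of _ "Suc _"])
    moreover have "x \<notin> B" using n(1) Suc by (auto dest: spec[of _ 0])
    ultimately show ?thesis using n Suc by auto
  qed
next
  assume "(x \<in> A \<and> hitE B As s) \<or> (x \<notin> B \<and> hitE B (A#As) s)"
  then show "hitE B (A#As) (x ## s)"
  proof
    assume "x \<in> A \<and> hitE B As s"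
    then show ?thesis by (auto intro!: exI[of _ 0])
  next
    assume h: "x \<notin> B \<and> hitE B (A#As) s"
    then obtain m where m: "\<forall>i<m. s !! i \<notin> B" "s !! m \<in> A" "hitE B As (sdrop (Suc m) s)" by auto
    have "\<forall>i<Suc m. (x##s) !! i \<notin> B" using m(1) h by (auto simp: less_Suc_eq_0_disj)
    then show ?thesis using m by (auto intro!: exI[of _ "Suc m"])
  qed
qed


lemma pred_Collect_sets: "Measurable.pred M P \<Longrightarrow> {x\<in>space M. P x} \<in> sets M"
  by measurable

lemma hitE_prob:
  assumes mu: "prob_space \<mu>" and B: "B \<in> sets \<mu>" and q: "measure \<mu> B > 0"
    and As: "\<forall>A\<in>set As. A \<in> sets \<mu> \<and> A \<subseteq> B"
  shows "measure (stream_space \<mu>) {\<omega>\<in>space (stream_space \<mu>). hitE B As \<omega>}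
           = (\<Prod>A\<leftarrow>As. measure \<mu> A / measure \<mu> B)"
  using As
proof (induction As)
  case Nil
  interpret S: prob_space "stream_space \<mu>" using mu by (rule prob_space.prob_space_stream_space)
  show ?case by (simp add: S.prob_space)
next
  case (Cons A As)
  interpret prob_space \<mu> by fact
  interpret S: prob_space "stream_space \<mu>" by (rule prob_space_stream_space)
  have A: "A \<in> sets \<mu>" "A \<subseteq> B" and As': "\<forall>A\<in>set As. A \<in> sets \<mu> \<and> A \<subseteq> B" using Cons.prems by auto
  define E where "E = {\<omega>\<in>space (stream_space \<mu>). hitE B (A#As) \<omega>}"
  define E' where "E' = {\<omega>\<in>space (stream_space \<mu>). hitE B As \<omega>}"
  have Em: "E \<in> sets (stream_space \<mu>)" unfolding E_def
    by (rule pred_Collect_sets, rule meas_hitE) (use B A As' in auto)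
  have E'm: "E' \<in> sets (stream_space \<mu>)" unfolding E'_def
    by (rule pred_Collect_sets, rule meas_hitE) (use B As' in auto)
  have Bc: "space \<mu> - B \<in> sets \<mu>" using B by auto
  have pt: "indicator E (x ## s) = indicator A x * indicator E' s + indicator (space \<mu> - B) x * (indicator E s :: ennreal)"
    if x: "x \<in> space \<mu>" and s: "s \<in> space (stream_space \<mu>)" for x s
  proof -
    have xs: "x ## s \<in> space (stream_space \<mu>)" using x s by (simp add: space_stream_space)
    have "hitE B (A#As) (x ## s) \<longleftrightarrow> (x \<in> A \<and> hitE B As s) \<or> (x \<notin> B \<and> hitE B (A#As) s)"
      by (rule hitE_Cons_SCons[OF A(2)])
    then have "x ## s \<in> E \<longleftrightarrow> (x \<in> A \<and> s \<in> E') \<or> (x \<in> space \<mu> - B \<and> s \<in> E)"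
      using xs s x unfolding E_def E'_def by blast
    moreover have "\<not> (x \<in> A \<and> x \<in> space \<mu> - B)" using A(2) by blast
    ultimately show ?thesis by (auto simp: indicator_def simp del: hitE.simps)
  qed
  have "emeasure (stream_space \<mu>) E = (\<integral>\<^sup>+\<omega>. indicator E \<omega> \<partial>stream_space \<mu>)"
    using Em by simp
  also have "\<dots> = (\<integral>\<^sup>+x. \<integral>\<^sup>+s. indicator E (x ## s) \<partial>stream_space \<mu> \<partial>\<mu>)"
    by (rule nn_integral_stream_space) (use Em in simp)
  also have "\<dots> = (\<integral>\<^sup>+x. \<integral>\<^sup>+s. (indicator A x * indicator E' s + indicator (space \<mu> - B) x * indicator E s)
                  \<partial>stream_space \<mu> \<partial>\<mu>)"
    by (intro nn_integral_cong) (simp add: pt)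
  also have "\<dots> = (\<integral>\<^sup>+x. (indicator A x * emeasure (stream_space \<mu>) E' +
                    indicator (space \<mu> - B) x * emeasure (stream_space \<mu>) E) \<partial>\<mu>)"
  proof (intro nn_integral_cong)
    fix x
    have "(\<integral>\<^sup>+s. (indicator A x * indicator E' s + indicator (space \<mu> - B) x * indicator E s) \<partial>stream_space \<mu>)
        = (\<integral>\<^sup>+s. indicator A x * indicator E' s \<partial>stream_space \<mu>) + (\<integral>\<^sup>+s. indicator (space \<mu> - B) x * indicator E s \<partial>stream_space \<mu>)"
      by (rule nn_integral_add) (use Em E'm in auto)
    also have "\<dots> = indicator A x * emeasure (stream_space \<mu>) E' + indicator (space \<mu> - B) x * emeasure (stream_space \<mu>) E"
      by (simp only: nn_integral_cmult_indicator[OF E'm] nn_integral_cmult_indicator[OF Em])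
    finally show "(\<integral>\<^sup>+s. (indicator A x * indicator E' s + indicator (space \<mu> - B) x * indicator E s) \<partial>stream_space \<mu>)
        = indicator A x * emeasure (stream_space \<mu>) E' + indicator (space \<mu> - B) x * emeasure (stream_space \<mu>) E" .
  qed
  also have "\<dots> = emeasure (stream_space \<mu>) E' * emeasure \<mu> A + emeasure (stream_space \<mu>) E * emeasure \<mu> (space \<mu> - B)"
  proof -
    have t: "(\<integral>\<^sup>+x. indicator C x * c \<partial>\<mu>) = c * emeasure \<mu> C" if "C \<in> sets \<mu>" for C c
    proof -
      have "(\<integral>\<^sup>+x. indicator C x * c \<partial>\<mu>) = (\<integral>\<^sup>+x. c * indicator C x \<partial>\<mu>)" by (simp add: mult.commute)
      also have "\<dots> = c * emeasure \<mu> C" by (rule nn_integral_cmult_indicator[OF that])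
      finally show ?thesis .
    qed
    show ?thesis by (subst nn_integral_add) (use A Bc in \<open>auto simp: t\<close>)
  qed
  finally have eq: "emeasure (stream_space \<mu>) E = emeasure (stream_space \<mu>) E' * emeasure \<mu> A + emeasure (stream_space \<mu>) E * emeasure \<mu> (space \<mu> - B)" .
  define p where "p = S.prob E"
  define r where "r = S.prob E'"
  define a where "a = prob A"
  define qq where "qq = prob B"
  have e0: "prob (space \<mu> - B) = 1 - qq"
    using B by (simp add: prob_compl qq_def)
  have nn: "0 \<le> p" "0 \<le> r" "0 \<le> a" "0 \<le> 1 - qq"
    unfolding p_def r_def a_def qq_def by (auto simp: prob_le_1)
  from eq have "ennreal p = ennreal r * ennreal a + ennreal p * ennreal (prob (space \<mu> - B))"
    unfolding p_def r_def a_def S.emeasure_eq_measure emeasure_eq_measure .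
  then have "ennreal p = ennreal r * ennreal a + ennreal p * ennreal (1 - qq)"
    by (simp only: e0)
  also have "\<dots> = ennreal (r * a + p * (1 - qq))"
    using nn by (simp add: ennreal_plus ennreal_mult)
  finally have "p = r * a + p * (1 - qq)"
    using nn by (subst (asm) ennreal_inj) auto
  then have "p = a / qq * r" using q by (simp add: field_simps qq_def)
  then show ?case using Cons.IH[OF As'] unfolding p_def r_def a_def qq_def E_def E'_def by simp
qed


lemma subseq_distr:
  fixes \<mu> :: "'a measure" and \<nu> :: "'b measure"
  assumes mu: "prob_space \<mu>" and B: "B \<in> sets \<mu>" and q: "measure \<mu> B > 0"
    and d0: "d0 \<in> space \<mu>" "d0 \<notin> B"
    and nu: "prob_space \<nu>" and G: "G \<in> \<mu> \<rightarrow>\<^sub>M \<nu>"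
    and law: "\<And>Y. Y \<in> sets \<nu> \<Longrightarrow> measure \<mu> (G -` Y \<inter> B) / measure \<mu> B = measure \<nu> Y"
  shows "distr (stream_space \<mu>) (PiM UNIV (\<lambda>_::nat. \<nu>)) (\<lambda>\<omega> j. G (Wk B d0 j \<omega>)) = PiM UNIV (\<lambda>_. \<nu>)"
proof -
  interpret mu: prob_space \<mu> by fact
  interpret S: prob_space "stream_space \<mu>" by (rule mu.prob_space_stream_space)
  interpret nu: prob_space \<nu> by fact
  interpret P: product_prob_space "\<lambda>_::nat. \<nu>" UNIV by unfold_locales
  define \<Phi> where "\<Phi> = (\<lambda>\<omega> (j::nat). G (Wk B d0 j \<omega>))"
  have Wm: "Wk B d0 j \<in> stream_space \<mu> \<rightarrow>\<^sub>M \<mu>" for j by (rule meas_Wk[OF B d0(1)])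
  have Phim: "\<Phi> \<in> stream_space \<mu> \<rightarrow>\<^sub>M PiM UNIV (\<lambda>_. \<nu>)"
    unfolding \<Phi>_def by (rule measurable_PiM_single') (auto intro: measurable_compose[OF Wm G] measurable_space)
  show ?thesis unfolding \<Phi>_def[symmetric]
  proof (rule P.PiM_eq)
    show "sets (distr (stream_space \<mu>) (Pi\<^sub>M UNIV (\<lambda>_. \<nu>)) \<Phi>) = sets (Pi\<^sub>M UNIV (\<lambda>_. \<nu>))" by simp
  next
    fix J :: "nat set" and F assume J: "finite J" "J \<subseteq> UNIV" and F: "\<And>j. j \<in> J \<Longrightarrow> F j \<in> sets \<nu>"
    define K where "K = (if J = {} then 0 else Suc (Max J))"
    have JK: "j \<in> J \<Longrightarrow> j < K" for j using J by (auto simp: K_def less_Suc_eq_le)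
    define As where "As = map (\<lambda>j. if j \<in> J then G -` F j \<inter> B else B) [0..<K]"
    have AsB: "\<forall>A\<in>set As. A \<in> sets \<mu> \<and> A \<subseteq> B"
    proof
      fix A assume "A \<in> set As"
      then obtain j where "j < K" "A = (if j \<in> J then G -` F j \<inter> B else B)" unfolding As_def by auto
      moreover have "G -` F j \<inter> B \<in> sets \<mu>" if "j \<in> J"
      proof -
        have "G -` F j \<inter> space \<mu> \<in> sets \<mu>" using measurable_sets[OF G F[OF that]] .
        then have "(G -` F j \<inter> space \<mu>) \<inter> B \<in> sets \<mu>" using B by blast
        moreover have "(G -` F j \<inter> space \<mu>) \<inter> B = G -` F j \<inter> B" using sets.sets_into_space[OF B] by blast
        ultimately show ?thesis by simp
      qed
      ultimately show "A \<in> sets \<mu> \<and> A \<subseteq> B" using B by auto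
    qed
    define RB where "RB = replicate K B"
    have RB: "\<forall>A\<in>set RB. A \<in> sets \<mu> \<and> A \<subseteq> B" using B by (auto simp: RB_def)
    define H where "H = {\<omega>\<in>space (stream_space \<mu>). hitE B As \<omega>}"
    define Z where "Z = {\<omega>\<in>space (stream_space \<mu>). hitE B RB \<omega>}"
    define E where "E = \<Phi> -` prod_emb UNIV (\<lambda>_. \<nu>) J (Pi\<^sub>E J F) \<inter> space (stream_space \<mu>)"
    have Hm: "H \<in> sets (stream_space \<mu>)" unfolding H_def
      by (rule pred_Collect_sets, rule meas_hitE) (use B AsB in auto)
    have Zm: "Z \<in> sets (stream_space \<mu>)" unfolding Z_def
      by (rule pred_Collect_sets, rule meas_hitE) (use B RB in auto)
    have embm: "prod_emb UNIV (\<lambda>_. \<nu>) J (Pi\<^sub>E J F) \<in> sets (PiM UNIV (\<lambda>_. \<nu>))"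
      using J F by (intro sets_PiM_I) auto
    have Em: "E \<in> sets (stream_space \<mu>)" unfolding E_def using measurable_sets[OF Phim embm] .
    have Wsp: "Wk B d0 j \<omega> \<in> space \<mu>" if "\<omega> \<in> space (stream_space \<mu>)" for j \<omega>
      using measurable_space[OF Wm that] .
    have Phisp: "\<Phi> \<omega> \<in> space (PiM UNIV (\<lambda>_. \<nu>))" if "\<omega> \<in> space (stream_space \<mu>)" for \<omega>
      using measurable_space[OF Phim that] .
    have Gsp: "G (Wk B d0 j \<omega>) \<in> space \<nu>" if "\<omega> \<in> space (stream_space \<mu>)" for j \<omega>
      using measurable_space[OF G Wsp[OF that]] .
    have Ech: "\<omega> \<in> E \<longleftrightarrow> (\<forall>j\<in>J. G (Wk B d0 j \<omega>) \<in> F j)" if "\<omega> \<in> space (stream_space \<mu>)" for \<omega>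
      using that Phisp[OF that] Gsp[OF that] unfolding E_def prod_emb_def \<Phi>_def by (auto simp: PiE_iff)
    have Hch: "hitE B As \<omega> \<longleftrightarrow> (\<forall>j<K. Wk B d0 j \<omega> \<in> (if j \<in> J then G -` F j \<inter> B else B))" for \<omega>
      using hitE_W[of As B d0 \<omega>] AsB d0(2) unfolding As_def by auto
    have Zch: "hitE B RB \<omega> \<longleftrightarrow> (\<forall>j<K. Wk B d0 j \<omega> \<in> B)" for \<omega>
      using hitE_W[of RB B d0 \<omega>] RB d0(2) unfolding RB_def by auto
    have HE: "H \<subseteq> E" unfolding H_def using Ech Hch JK by auto
    have EZH: "E \<inter> Z \<subseteq> H" unfolding H_def Z_def using Ech Hch Zch Em sets.sets_into_space by auto
    have probZ: "S.prob Z = 1"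
      unfolding Z_def using hitE_prob[OF mu B q RB] q by (simp add: RB_def)
    have "AE \<omega> in stream_space \<mu>. \<omega> \<in> Z" using S.AE_in_set_eq_1[OF Zm] probZ by simp
    then have "AE \<omega> in stream_space \<mu>. \<omega> \<in> E \<longleftrightarrow> \<omega> \<in> H"
      by eventually_elim (use HE EZH in blast)
    then have "emeasure (stream_space \<mu>) E = emeasure (stream_space \<mu>) H"
      by (rule emeasure_eq_AE) (use Em Hm in auto)
    also have "\<dots> = ennreal (\<Prod>A\<leftarrow>As. measure \<mu> A / measure \<mu> B)"
      using hitE_prob[OF mu B q AsB] unfolding H_def by (simp add: S.emeasure_eq_measure)
    also have "(\<Prod>A\<leftarrow>As. measure \<mu> A / measure \<mu> B) = (\<Prod>j\<in>{0..<K}. (if j \<in> J then measure \<nu> (F j) else 1))"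
    proof -
      have "(\<Prod>A\<leftarrow>As. measure \<mu> A / measure \<mu> B) = (\<Prod>j\<leftarrow>[0..<K]. measure \<mu> (if j \<in> J then G -` F j \<inter> B else B) / measure \<mu> B)"
        unfolding As_def by (simp add: comp_def)
      also have "\<dots> = (\<Prod>j\<in>{0..<K}. measure \<mu> (if j \<in> J then G -` F j \<inter> B else B) / measure \<mu> B)"
        by (subst prod.distinct_set_conv_list[symmetric]) auto
      also have "\<dots> = (\<Prod>j\<in>{0..<K}. (if j \<in> J then measure \<nu> (F j) else 1))"
        using q by (intro prod.cong refl) (auto simp: law F)
      finally show ?thesis .
    qed
    also have "(\<Prod>j\<in>{0..<K}. (if j \<in> J then measure \<nu> (F j) else 1)) = (\<Prod>j\<in>J. measure \<nu> (F j))"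
    proof -
      have "J \<subseteq> {0..<K}" using JK by auto
      then show ?thesis by (subst prod.If_cases) (auto simp: Int_absorb1)
    qed
    also have "ennreal (\<Prod>j\<in>J. measure \<nu> (F j)) = (\<Prod>j\<in>J. emeasure \<nu> (F j))"
      by (simp add: prod_ennreal nu.emeasure_eq_measure)
    finally have "emeasure (stream_space \<mu>) E = (\<Prod>j\<in>J. emeasure \<nu> (F j))" .
    then show "emeasure (distr (stream_space \<mu>) (Pi\<^sub>M UNIV (\<lambda>_. \<nu>)) \<Phi>) (prod_emb UNIV (\<lambda>_. \<nu>) J (Pi\<^sub>E J F)) =
        (\<Prod>j\<in>J. emeasure \<nu> (F j))"
      by (subst emeasure_distr[OF Phim embm]) (simp add: E_def)
  qed
qed


definition cnt :: "'a set \<Rightarrow> nat \<Rightarrow> 'a stream \<Rightarrow> nat" where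
  "cnt B n \<omega> = length (filter (\<lambda>x. x \<in> B) (stake n \<omega>))"

lemma filter_stake_first:
  assumes "\<And>i. i < h \<Longrightarrow> \<omega> !! i \<notin> B" "\<omega> !! h \<in> B" "h < n"
  shows "filter (\<lambda>x. x \<in> B) (stake n \<omega>) = \<omega> !! h # filter (\<lambda>x. x \<in> B) (stake (n - Suc h) (sdrop (Suc h) \<omega>))"
proof -
  have nn: "Suc h + (n - Suc h) = n" using assms(3) by simp
  have "stake n \<omega> = stake (Suc h) \<omega> @ stake (n - Suc h) (sdrop (Suc h) \<omega>)"
    using stake_add[of "Suc h" \<omega> "n - Suc h"] unfolding nn by (rule sym)
  then have e: "stake n \<omega> = stake h \<omega> @ [\<omega> !! h] @ stake (n - Suc h) (sdrop (Suc h) \<omega>)"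
    unfolding stake_Suc by simp
  have "filter (\<lambda>x. x \<in> B) (stake h \<omega>) = []"
    using assms(1) by (auto simp: filter_empty_conv in_set_conv_nth)
  then show ?thesis unfolding e using assms(2) by (simp del: stake.simps sdrop.simps)
qed

lemma filter_W:
  assumes "j < cnt B n \<omega>"
  shows "Wk B d0 j \<omega> = filter (\<lambda>x. x \<in> B) (stake n \<omega>) ! j"
  using assms
proof (induction j arbitrary: \<omega> n)
  case (0 \<omega> n) note c = this
  have "filter (\<lambda>x. x \<in> B) (stake n \<omega>) \<noteq> []" using c by (auto simp: cnt_def)
  then obtain i where i: "i < n" "\<omega> !! i \<in> B" by (auto simp: filter_empty_conv in_set_conv_nth)
  note F = fh_props[OF i(2)]
  have hh: "hasHit B \<omega>" using i unfolding hasHit_def by blast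
  show ?case using filter_stake_first[OF F(3) F(1)] F(2) i(1) hh by simp
next
  case (Suc j \<omega> n) note c = this
  have "filter (\<lambda>x. x \<in> B) (stake n \<omega>) \<noteq> []" using c by (auto simp: cnt_def)
  then obtain i where i: "i < n" "\<omega> !! i \<in> B" by (auto simp: filter_empty_conv in_set_conv_nth)
  note F = fh_props[OF i(2)]
  have hh: "hasHit B \<omega>" using i unfolding hasHit_def by blast
  have eq: "filter (\<lambda>x. x \<in> B) (stake n \<omega>) = \<omega> !! fh B \<omega> # filter (\<lambda>x. x \<in> B) (stake (n - Suc (fh B \<omega>)) (sdrop (Suc (fh B \<omega>)) \<omega>))"
    using filter_stake_first[OF F(3) F(1)] F(2) i(1) by simp
  have "j < cnt B (n - Suc (fh B \<omega>)) (sdrop (Suc (fh B \<omega>)) \<omega>)"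
    using c(2) unfolding cnt_def eq by simp
  from c(1)[OF this] show ?case using hh eq by simp
qed

lemma set_filter_W:
  "set (filter (\<lambda>x. x \<in> B) (stake n \<omega>)) = (\<lambda>j. Wk B d0 j \<omega>) ` {..<cnt B n \<omega>}"
proof -
  have gen: "set xs = (\<lambda>j. xs ! j) ` {..<length xs}" for xs :: "'a list"
    by (auto simp: set_conv_nth)
  have "set (filter (\<lambda>x. x \<in> B) (stake n \<omega>)) = (\<lambda>j. filter (\<lambda>x. x \<in> B) (stake n \<omega>) ! j) ` {..<cnt B n \<omega>}"
    unfolding cnt_def by (rule gen)
  also have "\<dots> = (\<lambda>j. Wk B d0 j \<omega>) ` {..<cnt B n \<omega>}"
    by (intro image_cong refl) (simp add: filter_W)
  finally show ?thesis .
qed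

lemma set_filter_to_stream:
  "set (filter (\<lambda>x. x \<in> B) (stake n (to_stream g))) = g ` {..<n} \<inter> B"
  by (auto simp: in_set_conv_nth image_iff to_stream_def)

lemma cnt_to_stream:
  "real (cnt B n (to_stream g)) = (\<Sum>i<n. indicator B (g i))"
proof (induction n)
  case 0 then show ?case by (simp add: cnt_def)
next
  case (Suc n) then show ?case by (simp add: cnt_def stake_Suc to_stream_def indicator_def)
qed


definition Tmap :: "real^'d \<Rightarrow> real^'d \<Rightarrow> real^'d \<Rightarrow> real^'d" where
  "Tmap u v y = (\<chi> i. u$i + (v$i - u$i) * y$i)"
definition Tinv :: "real^'d \<Rightarrow> real^'d \<Rightarrow> real^'d \<Rightarrow> real^'d" where
  "Tinv u v x = (\<chi> i. (x$i - u$i) * (1 / (v$i - u$i)))"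

lemma Basis_cart_real: "(Basis :: (real^'n) set) = range (\<lambda>i. axis i 1)"
  by (auto simp: Basis_vec_def)

lemma prod_Basis_cart: "(\<Prod>j\<in>(Basis::(real^'n) set). g j) = (\<Prod>i\<in>UNIV. g (axis i 1))"
  by (simp add: Basis_cart_real prod.reindex inj_on_def axis_eq_axis)

lemma Tmap_cont: "continuous_on UNIV (Tmap u v)"
  unfolding Tmap_def by (intro continuous_intros)

lemma Tinv_cont: "continuous_on UNIV (Tinv u v)"
  unfolding Tinv_def by (intro continuous_intros)

lemma Tmap_meas[measurable]: "Tmap u v \<in> borel_measurable borel"
  by (rule borel_measurable_continuous_onI[OF Tmap_cont])

lemma Tinv_meas[measurable]: "Tinv u v \<in> borel_measurable borel"
  by (rule borel_measurable_continuous_onI[OF Tinv_cont])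

lemma Tinv_Tmap: "\<forall>i. u$i < v$i \<Longrightarrow> Tinv u v (Tmap u v x) = x"
proof -
  assume uv: "\<forall>i. u$i < v$i"
  have "v$i - u$i \<noteq> 0" for i using uv[rule_format, of i] by simp
  then show ?thesis by (simp add: Tinv_def Tmap_def vec_eq_iff)
qed

lemma Tmap_Tinv: "\<forall>i. u$i < v$i \<Longrightarrow> Tmap u v (Tinv u v x) = x"
proof -
  assume uv: "\<forall>i. u$i < v$i"
  have "v$i - u$i \<noteq> 0" for i using uv[rule_format, of i] by simp
  then show ?thesis by (simp add: Tinv_def Tmap_def vec_eq_iff)
qed

lemma lborel_Tmap:
  fixes u v :: "real^'d"
  assumes uv: "\<forall>i. u$i < v$i" and A: "A \<in> sets borel"
  shows "emeasure lborel A = ennreal (\<Prod>i\<in>UNIV. v$i - u$i) * emeasure lborel (Tmap u v -` A)"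
proof -
  let ?c = "\<lambda>j. (v - u) \<bullet> j"
  have c: "\<And>j. j \<in> Basis \<Longrightarrow> ?c j \<noteq> 0" using uv
    by (auto simp: Basis_cart_real inner_axis) (metis less_irrefl)
  have T: "(\<lambda>x. u + (\<Sum>j\<in>Basis. (?c j * (x \<bullet> j)) *\<^sub>R j)) = Tmap u v"
  proof (rule ext)
    fix x :: "real^'d"
    define w where "w = (\<chi> i. (v$i - u$i) * x$i)"
    have "(\<Sum>j\<in>Basis. (?c j * (x \<bullet> j)) *\<^sub>R j) = (\<Sum>j\<in>Basis. (w \<bullet> j) *\<^sub>R j)"
      by (intro sum.cong refl) (auto simp: Basis_cart_real inner_axis w_def)
    also have "\<dots> = w" by (rule euclidean_representation)
    finally show "u + (\<Sum>j\<in>Basis. (?c j * (x \<bullet> j)) *\<^sub>R j) = Tmap u v x"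
      by (simp add: w_def Tmap_def vec_eq_iff)
  qed
  have K: "(\<Prod>j\<in>Basis. \<bar>?c j\<bar>) = (\<Prod>i\<in>UNIV. v$i - u$i)"
    using uv by (simp add: prod_Basis_cart inner_axis less_imp_le)
  have eq: "lborel = density (distr lborel borel (Tmap u v)) (\<lambda>_. ennreal (\<Prod>i\<in>UNIV. v$i - u$i))"
    using lborel_affine_euclidean[where c="\<lambda>j. (v - u) \<bullet> j" and t=u, OF c] unfolding T K .
  have "emeasure lborel A = emeasure (density (distr lborel borel (Tmap u v)) (\<lambda>_. ennreal (\<Prod>i\<in>UNIV. v$i - u$i))) A"
    using arg_cong[where f="\<lambda>M. emeasure M A", OF eq] .
  also have "\<dots> = (\<integral>\<^sup>+x. ennreal (\<Prod>i\<in>UNIV. v$i - u$i) * indicator A x \<partial>distr lborel borel (Tmap u v))"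
    using A by (subst emeasure_density) (auto simp: mult.commute)
  also have "\<dots> = ennreal (\<Prod>i\<in>UNIV. v$i - u$i) * emeasure (distr lborel borel (Tmap u v)) A"
    using A by (intro nn_integral_cmult_indicator) simp
  also have "emeasure (distr lborel borel (Tmap u v)) A = emeasure lborel (Tmap u v -` A)"
    using A by (subst emeasure_distr) auto
  finally show ?thesis .
qed

lemma law_box:
  fixes u v :: "real^'d"
  assumes uv: "\<forall>i. u$i < v$i" and Y: "Y \<in> sets borel"
  shows "emeasure lborel (Tinv u v -` Y \<inter> box u v) = ennreal (\<Prod>i\<in>UNIV. v$i - u$i) * emeasure lborel (Y \<inter> box 0 1)"
proof -
  have A: "Tinv u v -` Y \<inter> box u v \<in> sets borel"
  proof -
    have "Tinv u v -` Y \<inter> space borel \<in> sets borel" using measurable_sets[OF Tinv_meas Y] .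
    then show ?thesis by auto
  qed
  have "Tmap u v -` (Tinv u v -` Y \<inter> box u v) = Y \<inter> box 0 1"
  proof (intro set_eqI)
    fix x :: "real^'d"
    have comp: "(u$i < u$i + (v$i-u$i)*x$i \<and> u$i + (v$i-u$i)*x$i < v$i) \<longleftrightarrow> (0 < x$i \<and> x$i < 1)" for i
    proof -
      have c: "0 < v$i-u$i" using uv by simp
      have 1: "u$i < u$i + (v$i-u$i)*x$i \<longleftrightarrow> 0 < x$i" using c by (simp add: zero_less_mult_iff)
      have "u$i + (v$i-u$i)*x$i < v$i \<longleftrightarrow> (v$i-u$i)*x$i < (v$i-u$i)" by linarith
      also have "\<dots> \<longleftrightarrow> x$i < 1" using mult_less_cancel_left_pos[OF c, of "x$i" 1] by simp
      finally show ?thesis using 1 by blast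
    qed
    have "Tmap u v x \<in> box u v \<longleftrightarrow> x \<in> box 0 1"
      unfolding mem_box_cart Tmap_def using comp by simp
    then show "x \<in> Tmap u v -` (Tinv u v -` Y \<inter> box u v) \<longleftrightarrow> x \<in> Y \<inter> box 0 1"
      using Tinv_Tmap[OF uv] by auto
  qed
  then show ?thesis using lborel_Tmap[OF uv A] by simp
qed

lemma vol_box:
  fixes u v :: "real^'d"
  assumes uv: "\<forall>i. u$i < v$i"
  shows "emeasure lborel (box u v) = ennreal (\<Prod>i\<in>UNIV. v$i - u$i)"
proof -
  have "\<forall>b\<in>Basis. u \<bullet> b \<le> v \<bullet> b" using uv by (auto simp: Basis_cart_real inner_axis less_imp_le)
  then show ?thesis using uv by (simp add: emeasure_lborel_box_eq prod_Basis_cart inner_axis less_imp_le)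
qed

lemma unif_cube_law:
  assumes Y: "Y \<in> sets borel"
  shows "measure (unif_cube :: (real^'d) measure) Y = measure lborel (Y \<inter> box 0 1)"
proof -
  have one: "\<forall>i. (0::real^'d)$i < (1::real^'d)$i" by simp
  have "\<forall>b\<in>(Basis::(real^'d) set). (0::real^'d) \<bullet> b \<le> 1 \<bullet> b" by (auto simp: Basis_cart_real inner_axis)
  then have cb: "emeasure lborel (cbox 0 (1::real^'d)) = 1"
    by (simp add: emeasure_lborel_cbox_eq prod_Basis_cart inner_axis)
  have b: "emeasure lborel (box 0 (1::real^'d)) = 1"
    using vol_box[OF one] by simp
  have null: "cbox 0 (1::real^'d) - box 0 1 \<in> null_sets lborel"
  proof -
    have "emeasure lborel (cbox 0 (1::real^'d) - box 0 1) = emeasure lborel (cbox 0 (1::real^'d)) - emeasure lborel (box 0 (1::real^'d))"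
      by (rule emeasure_Diff) (auto simp: box_subset_cbox b)
    then show ?thesis using cb b by (auto simp: null_sets_def)
  qed
  have "Y \<inter> cbox 0 1 = (Y \<inter> box 0 1) \<union> (Y \<inter> (cbox 0 1 - box 0 1))" using box_subset_cbox by blast
  moreover have "Y \<inter> (cbox 0 1 - box 0 (1::real^'d)) \<in> null_sets lborel"
    by (rule null_sets_subset[OF null]) (use Y in auto)
  ultimately have e: "emeasure lborel (Y \<inter> cbox 0 1) = emeasure lborel (Y \<inter> box 0 (1::real^'d))"
    using Y by (simp add: emeasure_Un_null_set)
  have "emeasure (unif_cube :: (real^'d) measure) Y = emeasure lborel (Y \<inter> box 0 1)"
    unfolding unif_cube_def using Y e by (simp add: emeasure_uniform_measure cb Int_commute divide_ennreal_def)
  then show ?thesis by (simp add: measure_def)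
qed


lemma powr_split_aux:
  fixes n N :: real and d :: real
  assumes "n > 0" "N > 0"
  shows "n powr (-1/d) = (N / n) powr (1/d) * N powr (-1/d)"
proof -
  have "(N / n) powr (1/d) * N powr (-1/d) = (N powr (1/d) / n powr (1/d)) * N powr (-1/d)"
    using assms by (simp add: powr_divide)
  also have "\<dots> = (N powr (1/d) * N powr (-1/d)) / n powr (1/d)" by simp
  also have "N powr (1/d) * N powr (-1/d) = 1"
    using assms by (simp add: powr_add[symmetric])
  also have "1 / n powr (1/d) = n powr (-1/d)"
    using assms by (simp add: powr_minus_divide)
  finally show ?thesis by simp
qed

lemma det_lim:
  fixes Lf :: "nat \<Rightarrow> real" and N :: "nat \<Rightarrow> nat" and l :: "nat \<Rightarrow> real" and d c q :: real
  assumes L: "(\<lambda>m. real m powr (-1/d) * Lf m) \<longlonglongrightarrow> c" and c: "c > 0" and q: "q > 0" and d: "d > 0"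
    and cnt: "\<forall>k::nat. eventually (\<lambda>n. real (N n) > (1 - 1 / real (k+2)) * q * real n) sequentially"
    and lge: "\<And>n. l n \<ge> Lf (N n)" and Lnn: "\<And>m. Lf m \<ge> 0"
  shows "\<forall>y < c * q powr (1/d). eventually (\<lambda>n. y < real n powr (-1/d) * l n) sequentially"
proof (intro allI impI)
  fix y assume y: "y < c * q powr (1/d)"
  show "eventually (\<lambda>n. y < real n powr (-1/d) * l n) sequentially"
  proof (cases "y < 0")
    case True
    have "y < real n powr (-1/d) * l n" for n
    proof -
      have "0 \<le> l n" using lge[of n] Lnn[of "N n"] by linarith
      then have "0 \<le> real n powr (-1/d) * l n" by simp
      then show ?thesis using True by linarith
    qed
    then show ?thesis by simp
  next
    case False
    define \<rho> where "\<rho> = (\<lambda>k::nat. 1 - 1 / real (k+2))"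
    have rho_lim: "\<rho> \<longlonglongrightarrow> 1"
    proof -
      have "(\<lambda>k::nat. 1 / real (k+2)) \<longlonglongrightarrow> 0"
        using LIMSEQ_ignore_initial_segment[OF lim_const_over_n[of 1], of 2]
        by (simp add: add.commute)
      then show ?thesis unfolding \<rho>_def using tendsto_diff[OF tendsto_const] by fastforce
    qed
    have "(\<lambda>k. (\<rho> k * q) powr (1/d) * (\<rho> k * c)) \<longlonglongrightarrow> (1 * q) powr (1/d) * (1 * c)"
      using q by (intro tendsto_intros rho_lim) auto
    then have "eventually (\<lambda>k. y < (\<rho> k * q) powr (1/d) * (\<rho> k * c)) sequentially"
      using y by (intro order_tendstoD(1)) (auto simp: mult.commute)
    then obtain k where k: "y < (\<rho> k * q) powr (1/d) * (\<rho> k * c)"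
      by (meson eventually_sequentially order_refl)
    have rk: "0 < \<rho> k" "\<rho> k < 1" unfolding \<rho>_def by (auto simp: field_simps)
    have "eventually (\<lambda>m. \<rho> k * c < real m powr (-1/d) * Lf m) sequentially"
      using L rk c by (intro order_tendstoD(1)) auto
    then obtain M0 where M0: "\<And>m. m \<ge> M0 \<Longrightarrow> \<rho> k * c < real m powr (-1/d) * Lf m"
      by (auto simp: eventually_sequentially)
    have ev2: "eventually (\<lambda>n. real n \<ge> real M0 / (\<rho> k * q) + 1) sequentially"
      by (rule eventually_sequentiallyI[of "nat \<lceil>real M0 / (\<rho> k * q) + 1\<rceil>"]) linarith
    have ev1: "eventually (\<lambda>n. real (N n) > \<rho> k * q * real n) sequentially"
      using cnt unfolding \<rho>_def by blast
    show ?thesis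
      using ev1 ev2
    proof eventually_elim
      case (elim n)
      have rq: "0 < \<rho> k * q" using rk q by simp
      have npos: "real n > 0"
      proof -
        have "real M0 / (\<rho> k * q) \<ge> 0" using rq by simp
        then show ?thesis using elim(2) by linarith
      qed
      have "real (N n) > \<rho> k * q * real n" by (fact elim(1))
      moreover have "\<rho> k * q * real n \<ge> real M0 + \<rho> k * q"
      proof -
        have "\<rho> k * q * real n \<ge> \<rho> k * q * (real M0 / (\<rho> k * q) + 1)"
          using elim(2) rq by (intro mult_left_mono) auto
        also have "\<rho> k * q * (real M0 / (\<rho> k * q) + 1) = real M0 + \<rho> k * q"
        proof -
          have ne: "\<rho> k * q \<noteq> 0" using rq by (metis less_irrefl)
          have "\<rho> k * q * (real M0 / (\<rho> k * q)) = real M0" using ne by simp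
          then show ?thesis by (simp add: distrib_left)
        qed
        finally show ?thesis .
      qed
      ultimately have NM: "N n \<ge> M0" using rq by linarith
      have Npos: "real (N n) > 0" using \<open>real (N n) > \<rho> k * q * real n\<close> rq npos
        by (smt (verit) mult_pos_pos)
      have ratio: "real (N n) / real n \<ge> \<rho> k * q"
        using \<open>real (N n) > \<rho> k * q * real n\<close> npos by (simp add: field_simps)
      have "y < (\<rho> k * q) powr (1/d) * (\<rho> k * c)" by (fact k)
      also have "\<dots> \<le> (real (N n) / real n) powr (1/d) * (real (N n) powr (-1/d) * Lf (N n))"
      proof (rule mult_mono)
        show "(\<rho> k * q) powr (1/d) \<le> (real (N n) / real n) powr (1/d)"
          using ratio rq d by (intro powr_mono2) auto
        show "\<rho> k * c \<le> real (N n) powr (-1/d) * Lf (N n)" using M0[OF NM] by simp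
        show "0 \<le> (real (N n) / real n) powr (1/d)" by simp
        show "0 \<le> \<rho> k * c" using rk c by simp
      qed
      also have "\<dots> = real n powr (-1/d) * Lf (N n)"
        using powr_split_aux[OF npos Npos, of d] by simp
      also have "\<dots> \<le> real n powr (-1/d) * l n"
        using lge[of n] by (intro mult_left_mono) auto
      finally show ?case .
    qed
  qed
qed


lemma hoeff_ae:
  fixes X :: "nat \<Rightarrow> 'a \<Rightarrow> 'b::topological_space" and B :: "'b set"
  assumes M: "prob_space M" and ind: "prob_space.indep_vars M (\<lambda>_. borel) X UNIV"
    and dX: "\<And>i. distr M borel (X i) = distr M borel (X 0)"
    and B: "B \<in> sets borel"
    and q: "q = measure M (X 0 -` B \<inter> space M)" and eps: "\<epsilon> > 0"
  shows "AE \<omega> in M. eventually (\<lambda>n. (\<Sum>i<n. indicator B (X i \<omega>)) > (q - \<epsilon>) * real n) sequentially"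
proof -
  interpret prob_space M by fact
  define Y where "Y = (\<lambda>i \<omega>. indicator B (X i \<omega>) :: real)"
  have Xm: "X i \<in> borel_measurable M" for i using ind unfolding indep_vars_def by blast
  have Ym[measurable]: "Y i \<in> borel_measurable M" for i unfolding Y_def using Xm B by measurable
  have indY: "indep_vars (\<lambda>_. borel) Y UNIV"
    unfolding Y_def by (rule indep_vars_compose2[OF ind]) (use B in measurable)
  have dY: "distr M borel (Y i) = distr M borel (Y 0)" for i
  proof -
    have ib: "(indicator B :: 'b \<Rightarrow> real) \<in> borel_measurable borel" using B by simp
    have "distr M borel (Y i) = distr (distr M borel (X i)) borel (indicator B)"
      unfolding Y_def distr_distr[OF ib Xm] by (simp add: comp_def)
    also have "\<dots> = distr (distr M borel (X 0)) borel (indicator B)" by (subst dX[of i]) (rule refl)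
    also have "\<dots> = distr M borel (Y 0)"
      unfolding Y_def distr_distr[OF ib Xm] by (simp add: comp_def)
    finally show ?thesis .
  qed
  have EY: "expectation (Y 0) = q"
  proof -
    have "expectation (Y 0) = expectation (indicator (X 0 -` B \<inter> space M))"
      by (intro Bochner_Integration.integral_cong) (auto simp: Y_def indicator_def)
    also have "\<dots> = q" by (simp add: q Bochner_Integration.integral_indicator Int_absorb2)
    finally show ?thesis .
  qed
  define A where "A n = {\<omega>\<in>space M. (\<Sum>i\<in>{..<Suc n}. Y i \<omega>) / real (card {..<Suc n}) \<le> q - \<epsilon>}" for n
  have Am: "A n \<in> sets M" for n unfolding A_def by measurable
  have Ab: "measure M (A n) \<le> exp (-2 * \<epsilon>\<^sup>2) ^ Suc n" for n
  proof -
    interpret H: Hoeffding_ineq_iid M "{..<Suc n}" Y "Y 0" 0 1 "expectation (Y 0)"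
    proof unfold_locales
      show "indep_vars (\<lambda>_. borel) Y {..<Suc n}" using indep_vars_subset[OF indY] by simp
      show "AE x in M. Y 0 x \<in> {0..1}" by (simp add: Y_def indicator_def)
    qed (use dY in auto)
    have "measure M (A n) \<le> exp (- 2 * real (card {..<Suc n}) * \<epsilon>\<^sup>2 / (1 - 0)\<^sup>2)"
    proof -
      have ne: "{..<Suc n} \<noteq> {}" by blast
      show ?thesis using H.Hoeffding_ineq_le'[OF less_imp_le[OF eps] zero_less_one ne, unfolded EY] unfolding A_def by simp
    qed
    also have "\<dots> = exp (-2 * \<epsilon>\<^sup>2) ^ Suc n"
      by (subst exp_of_nat_mult[symmetric]) (simp add: algebra_simps)
    finally show ?thesis .
  qed
  have r: "norm (exp (-2 * \<epsilon>\<^sup>2)) < 1" using eps by simp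
  have "summable (\<lambda>n. exp (-2 * \<epsilon>\<^sup>2) ^ Suc n)"
    using summable_mult[OF summable_geometric[OF r], of "exp (-2 * \<epsilon>\<^sup>2)"] by simp
  then have summ: "summable (\<lambda>n. measure M (A n))"
    by (rule summable_comparison_test'[where N=0]) (use Ab in simp)
  have "AE \<omega> in M. eventually (\<lambda>n. \<omega> \<in> space M - A n) sequentially"
    by (rule borel_cantelli_AE1[OF Am _ summ]) (simp add: emeasure_eq_measure)
  then show ?thesis
  proof (rule AE_mp, intro AE_I2 impI)
    fix \<omega> assume \<omega>: "\<omega> \<in> space M" and ev: "eventually (\<lambda>n. \<omega> \<in> space M - A n) sequentially"
    have "eventually (\<lambda>n. (\<Sum>i<Suc n. indicator B (X i \<omega>)) > (q - \<epsilon>) * real (Suc n)) sequentially"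
      using ev
    proof eventually_elim
      case (elim n)
      then have "\<not> (\<Sum>i\<in>{..<Suc n}. Y i \<omega>) / real (Suc n) \<le> q - \<epsilon>" using \<omega> unfolding A_def by simp
      then have "(\<Sum>i\<in>{..<Suc n}. Y i \<omega>) / real (Suc n) > q - \<epsilon>" by simp
      then show ?case unfolding Y_def by (simp add: field_simps)
    qed
    then show "eventually (\<lambda>n. (\<Sum>i<n. indicator B (X i \<omega>)) > (q - \<epsilon>) * real n) sequentially"
      by (rule eventually_sequentially_Suc[THEN iffD1])
  qed
qed


lemma seq_law:
  fixes X :: "nat \<Rightarrow> 'a \<Rightarrow> real^'d" and h :: "real^'d \<Rightarrow> ennreal"
  assumes M: "prob_space M" and ind: "prob_space.indep_vars M (\<lambda>_. borel) X UNIV"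
    and dis: "\<And>i. distributed M lborel (X i) h"
  shows "distr M (stream_space (density lborel h)) (\<lambda>\<omega>. to_stream (\<lambda>i. X i \<omega>)) = stream_space (density lborel h)"
proof -
  interpret prob_space M by fact
  define \<mu> where "\<mu> = density lborel h"
  have Xm: "X i \<in> M \<rightarrow>\<^sub>M borel" for i
    using distributed_measurable[OF dis[of i]] by (simp add: measurable_lborel1 cong: measurable_cong_sets)
  have dX: "distr M borel (X i) = \<mu>" for i
  proof -
    have "distr M borel (X i) = distr M lborel (X i)" by (rule distr_cong) auto
    also have "\<dots> = \<mu>" unfolding \<mu>_def by (rule distributed_distr_eq_density[OF dis])
    finally show ?thesis .
  qed
  have "distr M (PiM UNIV (\<lambda>_. borel)) (\<lambda>x. \<lambda>i\<in>UNIV. X i x) = PiM UNIV (\<lambda>i. distr M borel (X i))"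
    using indep_vars_iff_distr_eq_PiM[where I=UNIV and M'="\<lambda>_. borel" and X=X] ind Xm by simp
  moreover have "(\<lambda>x. \<lambda>i\<in>UNIV. X i x) = (\<lambda>x i. X i x)" by (auto simp: restrict_def)
  ultimately have P0: "distr M (PiM UNIV (\<lambda>_. borel)) (\<lambda>x i. X i x) = PiM UNIV (\<lambda>_. \<mu>)"
    by (simp add: dX)
  have sP: "sets (PiM UNIV (\<lambda>_::nat. \<mu>)) = sets (PiM UNIV (\<lambda>_::nat. borel))"
    by (rule sets_PiM_cong) (auto simp: \<mu>_def)
  have Xv: "(\<lambda>x i. X i x) \<in> M \<rightarrow>\<^sub>M PiM UNIV (\<lambda>_. \<mu>)"
    unfolding measurable_cong_sets[OF refl sP] by (rule measurable_PiM_single') (auto intro: Xm measurable_space)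
  have P: "distr M (PiM UNIV (\<lambda>_. \<mu>)) (\<lambda>x i. X i x) = PiM UNIV (\<lambda>_. \<mu>)"
  proof -
    have "distr M (PiM UNIV (\<lambda>_. \<mu>)) (\<lambda>x i. X i x) = distr M (PiM UNIV (\<lambda>_. borel)) (\<lambda>x i. X i x)"
      by (rule distr_cong) (auto simp: sP)
    then show ?thesis using P0 by simp
  qed
  have "distr M (stream_space \<mu>) (\<lambda>\<omega>. to_stream (\<lambda>i. X i \<omega>)) = distr (distr M (PiM UNIV (\<lambda>_. \<mu>)) (\<lambda>x i. X i x)) (stream_space \<mu>) to_stream"
    by (subst distr_distr[OF measurable_to_stream Xv]) (simp add: comp_def)
  also have "\<dots> = stream_space \<mu>" unfolding P by (rule stream_space_eq_distr[symmetric])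
  finally show ?thesis unfolding \<mu>_def .
qed


lemma Tmap_leqq: "\<forall>i. u$i < v$i \<Longrightarrow> leqq x y \<Longrightarrow> leqq (Tmap u v x) (Tmap u v y)"
  unfolding leqq_def Tmap_def by (auto intro!: mult_left_mono simp: less_imp_le)

lemma emeasure_cbox01: "emeasure lborel (cbox 0 (1::real^'d)) = 1"
proof -
  have "\<forall>b\<in>(Basis::(real^'d) set). (0::real^'d) \<bullet> b \<le> 1 \<bullet> b" by (auto simp: Basis_cart_real inner_axis)
  then show ?thesis by (simp add: emeasure_lborel_cbox_eq prod_Basis_cart inner_axis)
qed

lemma box_main:
  fixes X :: "nat \<Rightarrow> 'a \<Rightarrow> real^'d" and h :: "real^'d \<Rightarrow> real"
  assumes M: "prob_space M" and ind: "prob_space.indep_vars M (\<lambda>_. borel) X UNIV"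
    and dis: "\<And>i. distributed M lborel (X i) (\<lambda>x. ennreal (h x))"
    and cd: "is_cd TYPE('d) c"
    and uv: "\<forall>i. u$i < v$i" and a: "a > 0" and hB: "\<And>x. x \<in> box u v \<Longrightarrow> h x = a"
  shows "AE \<omega> in M. \<forall>y < c * (a * (\<Prod>i\<in>UNIV. v$i - u$i)) powr (1 / real CARD('d)).
           eventually (\<lambda>n. y < real n powr (-1 / real CARD('d)) * real (lchain ((\<lambda>i. X i \<omega>) ` {..<n} \<inter> box u v))) sequentially"
proof -
  interpret prob_space M by fact
  define \<mu> where "\<mu> = density lborel (\<lambda>x. ennreal (h x))"
  define B where "B = box u v"
  define vol where "vol = (\<Prod>i\<in>UNIV. v$i - u$i)"
  have volpos: "vol > 0" unfolding vol_def using uv by (intro prod_pos) auto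
  have Xm: "X i \<in> M \<rightarrow>\<^sub>M borel" for i
    using distributed_measurable[OF dis[of i]] by (simp add: measurable_lborel1 cong: measurable_cong_sets)
  have dX: "distr M lborel (X i) = \<mu>" for i unfolding \<mu>_def by (rule distributed_distr_eq_density[OF dis])
  have mu: "prob_space \<mu>" using prob_space_distr[OF distributed_measurable[OF dis[of 0]]] dX[of 0] by simp
  interpret mu: prob_space \<mu> by fact
  have smu: "sets \<mu> = sets borel" unfolding \<mu>_def by simp
  have spmu: "space \<mu> = UNIV" unfolding \<mu>_def by simp
  have Bm: "B \<in> sets borel" unfolding B_def by simp
  have hm: "(\<lambda>x. ennreal (h x)) \<in> borel_measurable borel"
    using distributed_borel_measurable[OF dis[of 0]] by (simp add: measurable_lborel1 cong: measurable_cong_sets)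
  have muZ: "emeasure \<mu> Z = ennreal a * emeasure lborel Z" if "Z \<subseteq> B" "Z \<in> sets borel" for Z
  proof -
    have "emeasure \<mu> Z = (\<integral>\<^sup>+x. ennreal (h x) * indicator Z x \<partial>lborel)"
      unfolding \<mu>_def using that hm by (subst emeasure_density) auto
    also have "\<dots> = (\<integral>\<^sup>+x. ennreal a * indicator Z x \<partial>lborel)"
      by (intro nn_integral_cong) (use that hB in \<open>auto simp: indicator_def B_def\<close>)
    also have "\<dots> = ennreal a * emeasure lborel Z" using that by (intro nn_integral_cmult_indicator) auto
    finally show ?thesis .
  qed
  define q where "q = measure \<mu> B"
  have qe: "q = a * vol"
  proof -
    have "ennreal q = emeasure \<mu> B" unfolding q_def by (simp add: mu.emeasure_eq_measure)
    also have "\<dots> = ennreal a * ennreal vol"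
      using muZ[OF order_refl Bm] vol_box[OF uv] unfolding B_def vol_def by simp
    also have "\<dots> = ennreal (a * vol)" using a volpos by (simp add: ennreal_mult)
    finally show ?thesis using a volpos by (subst (asm) ennreal_inj) (auto simp: q_def)
  qed
  have qpos: "q > 0" using qe a volpos by simp
  have nu: "prob_space (unif_cube :: (real^'d) measure)"
    unfolding unif_cube_def by (rule prob_space_uniform_measure) (simp_all add: emeasure_cbox01)
  have sU: "sets (unif_cube :: (real^'d) measure) = sets borel" unfolding unif_cube_def by simp
  have G: "Tinv u v \<in> \<mu> \<rightarrow>\<^sub>M unif_cube"
    unfolding measurable_cong_sets[OF smu sU] by (rule Tinv_meas)
  have law: "measure \<mu> (Tinv u v -` Y \<inter> B) / measure \<mu> B = measure unif_cube Y"
    if "Y \<in> sets unif_cube" for Y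
  proof -
    have Y: "Y \<in> sets borel" using that sU by simp
    have Zm: "Tinv u v -` Y \<inter> B \<in> sets borel"
    proof -
      have "Tinv u v -` Y \<inter> space borel \<in> sets borel" using measurable_sets[OF Tinv_meas Y] .
      then show ?thesis using Bm by auto
    qed
    have "emeasure lborel (Y \<inter> box 0 1) \<le> emeasure lborel (box 0 (1::real^'d))"
      by (rule emeasure_mono) auto
    also have "\<dots> = 1" using vol_box[of "0::real^'d" 1] by simp
    finally have fin: "emeasure lborel (Y \<inter> box 0 (1::real^'d)) \<noteq> \<top>" by (auto simp: top_unique)
    have "emeasure \<mu> (Tinv u v -` Y \<inter> B) = ennreal a * (ennreal vol * emeasure lborel (Y \<inter> box 0 1))"
      using muZ[OF _ Zm] law_box[OF uv Y] unfolding B_def vol_def by auto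
    also have "\<dots> = ennreal (a * vol * measure lborel (Y \<inter> box 0 1))"
      using fin a volpos by (simp add: emeasure_eq_ennreal_measure ennreal_mult mult.assoc)
    finally have "measure \<mu> (Tinv u v -` Y \<inter> B) = a * vol * measure lborel (Y \<inter> box 0 1)"
      using a volpos by (simp add: mu.emeasure_eq_measure)
    then show ?thesis using unif_cube_law[OF Y] qe a volpos unfolding q_def[symmetric] by simp
  qed
  have d0: "u \<in> space \<mu>" "u \<notin> B" using spmu by (auto simp: B_def mem_box_cart)
  have SD: "distr (stream_space \<mu>) (PiM UNIV (\<lambda>_::nat. unif_cube)) (\<lambda>\<omega> j. Tinv u v (Wk B u j \<omega>)) = PiM UNIV (\<lambda>_. unif_cube)"
    by (rule subseq_distr[OF mu _ _ d0 nu G law]) (use Bm smu qpos q_def in auto)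
  define \<Phi> where "\<Phi> = (\<lambda>\<omega> j. Tinv u v (Wk B u j \<omega>))"
  have Wm: "Wk B u j \<in> stream_space \<mu> \<rightarrow>\<^sub>M \<mu>" for j using meas_Wk[of B \<mu> u] Bm smu d0 by auto
  have Phim: "\<Phi> \<in> stream_space \<mu> \<rightarrow>\<^sub>M PiM UNIV (\<lambda>_. unif_cube)"
    unfolding \<Phi>_def by (rule measurable_PiM_single') (auto intro: measurable_compose[OF Wm G] measurable_space)
  define d where "d = real CARD('d)"
  define conv where "conv = (\<lambda>\<omega>'::nat \<Rightarrow> real^'d. (\<lambda>n. real n powr (-1/d) * real (lchain (\<omega>' ` {..<n}))) \<longlonglongrightarrow> c)"
  have cd': "c > 0" "AE \<omega>' in PiM UNIV (\<lambda>_::nat. unif_cube::(real^'d) measure). conv \<omega>'"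
    using cd unfolding is_cd_def conv_def d_def by auto
  have AE1: "AE \<omega> in stream_space \<mu>. conv (\<Phi> \<omega>)"
  proof (rule AE_distrD[OF Phim])
    have SD': "distr (stream_space \<mu>) (PiM UNIV (\<lambda>_::nat. unif_cube)) \<Phi> = PiM UNIV (\<lambda>_. unif_cube)"
      using SD unfolding \<Phi>_def .
    show "AE \<omega>' in distr (stream_space \<mu>) (PiM UNIV (\<lambda>_::nat. unif_cube)) \<Phi>. conv \<omega>'"
      unfolding SD' by (rule cd'(2))
  qed
  have Xmu: "X i \<in> M \<rightarrow>\<^sub>M \<mu>" for i unfolding measurable_cong_sets[OF refl smu] by (rule Xm)
  have Xv: "(\<lambda>x i. X i x) \<in> M \<rightarrow>\<^sub>M PiM UNIV (\<lambda>_. \<mu>)"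
    by (rule measurable_PiM_single') (auto intro: Xmu measurable_space)
  have Xs: "(\<lambda>\<omega>. to_stream (\<lambda>i. X i \<omega>)) \<in> M \<rightarrow>\<^sub>M stream_space \<mu>"
    using measurable_compose[OF Xv measurable_to_stream] .
  have SL: "distr M (stream_space \<mu>) (\<lambda>\<omega>. to_stream (\<lambda>i. X i \<omega>)) = stream_space \<mu>"
    unfolding \<mu>_def by (rule seq_law[OF M ind dis])
  have AE2: "AE \<omega> in M. conv (\<Phi> (to_stream (\<lambda>i. X i \<omega>)))"
    by (rule AE_distrD[OF Xs]) (unfold SL, rule AE1)
  have dXb: "distr M borel (X i) = distr M borel (X 0)" for i
  proof -
    have "distr M borel (X i) = distr M lborel (X i)" by (rule distr_cong) auto
    also have "\<dots> = distr M lborel (X 0)" using dX by simp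
    also have "\<dots> = distr M borel (X 0)" by (rule distr_cong) auto
    finally show ?thesis .
  qed
  have qM: "q = measure M (X 0 -` B \<inter> space M)"
  proof -
    have "q = measure (distr M lborel (X 0)) B" unfolding q_def dX ..
    also have "\<dots> = measure M (X 0 -` B \<inter> space M)"
      by (rule measure_distr) (use Xm Bm in \<open>auto simp: measurable_lborel1 cong: measurable_cong_sets\<close>)
    finally show ?thesis .
  qed
  have AE3: "AE \<omega> in M. \<forall>k::nat. eventually (\<lambda>n. (\<Sum>i<n. indicator B (X i \<omega>)) > (q - q / real (k+2)) * real n) sequentially"
  proof (rule AE_all_countable[THEN iffD2], intro allI)
    fix k :: nat
    show "AE \<omega> in M. eventually (\<lambda>n. (\<Sum>i<n. indicator B (X i \<omega>)) > (q - q / real (k+2)) * real n) sequentially"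
      by (rule hoeff_ae[OF M ind dXb Bm qM]) (use qpos in simp)
  qed
  show ?thesis using AE2 AE3
  proof eventually_elim
    case (elim \<omega>)
    define s where "s = to_stream (\<lambda>i. X i \<omega>)"
    define Lf where "Lf m = real (lchain (\<Phi> s ` {..<m}))" for m
    define N where "N n = cnt B n s" for n
    define l where "l n = real (lchain ((\<lambda>i. X i \<omega>) ` {..<n} \<inter> box u v))" for n
    have L: "(\<lambda>m. real m powr (-1/d) * Lf m) \<longlonglongrightarrow> c" using elim(1) unfolding conv_def Lf_def s_def .
    have cntk: "\<forall>k::nat. eventually (\<lambda>n. real (N n) > (1 - 1 / real (k+2)) * q * real n) sequentially"
    proof
      fix k :: nat
      show "eventually (\<lambda>n. real (N n) > (1 - 1 / real (k+2)) * q * real n) sequentially"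
        using elim(2)[rule_format, of k]
        by (rule eventually_mono) (simp add: N_def s_def cnt_to_stream algebra_simps)
    qed
    have lge: "l n \<ge> Lf (N n)" for n
    proof -
      have e1: "(\<lambda>i. X i \<omega>) ` {..<n} \<inter> box u v = (\<lambda>j. Wk B u j s) ` {..<N n}"
        using set_filter_to_stream[of B n "\<lambda>i. X i \<omega>"] set_filter_W[of B n s u] unfolding N_def B_def s_def by simp
      have e2: "(\<lambda>j. Wk B u j s) ` {..<N n} = Tmap u v ` (\<Phi> s ` {..<N n})"
        unfolding \<Phi>_def image_image using Tmap_Tinv[OF uv] by simp
      have "lchain (\<Phi> s ` {..<N n}) \<le> lchain (Tmap u v ` (\<Phi> s ` {..<N n}))"
        by (rule lchain_mono_map) (auto intro: inj_on_inverseI[of _ "Tinv u v"] Tinv_Tmap[OF uv] Tmap_leqq[OF uv])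
      then show ?thesis unfolding l_def Lf_def e1 e2 by simp
    qed
    have "\<forall>y < c * q powr (1/d). eventually (\<lambda>n. y < real n powr (-1/d) * l n) sequentially"
      by (rule det_lim[OF L cd'(1) qpos _ cntk lge]) (auto simp: d_def Lf_def)
    then show ?case unfolding l_def d_def qe vol_def by simp
  qed
qed


definition gd :: "(real \<Rightarrow> real^'d) \<Rightarrow> real \<Rightarrow> real^'d" where
  "gd \<gamma> t = vector_derivative \<gamma> (at t within {0..1})"

lemma adm_deriv:
  assumes "admissible \<gamma>" "t \<in> {0..1}"
  shows "(\<gamma> has_vector_derivative gd \<gamma> t) (at t within {0..1})"
  using assms unfolding admissible_def gd_def by (simp add: vector_derivative_works[symmetric])

lemma adm_gd_cont: "admissible \<gamma> \<Longrightarrow> continuous_on {0..1} (gd \<gamma>)"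
  unfolding admissible_def gd_def by auto

lemma adm_gd_nonneg: "admissible \<gamma> \<Longrightarrow> t \<in> {0..1} \<Longrightarrow> gd \<gamma> t $ i \<ge> 0"
  unfolding admissible_def gd_def by auto

lemma adm_cont: "admissible \<gamma> \<Longrightarrow> continuous_on {0..1} \<gamma>"
  using adm_deriv unfolding continuous_on_eq_continuous_within
  by (metis has_vector_derivative_continuous)

lemma adm_ftc:
  assumes "admissible \<gamma>" "0 \<le> s" "s \<le> t" "t \<le> 1"
  shows "(gd \<gamma> has_integral (\<gamma> t - \<gamma> s)) {s..t}"
proof (rule fundamental_theorem_of_calculus[OF assms(3)])
  fix x assume "x \<in> {s..t}"
  then have "x \<in> {0..1}" using assms by auto
  from adm_deriv[OF assms(1) this] show "(\<gamma> has_vector_derivative gd \<gamma> x) (at x within {s..t})"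
    by (rule has_vector_derivative_within_subset) (use assms in auto)
qed

lemma adm_ftc_comp:
  assumes "admissible \<gamma>" "0 \<le> s" "s \<le> t" "t \<le> 1"
  shows "((\<lambda>x. gd \<gamma> x $ i) has_integral (\<gamma> t $ i - \<gamma> s $ i)) {s..t}"
  using has_integral_linear[OF adm_ftc[OF assms] bounded_linear_vec_nth[of i]] by (simp add: comp_def)

lemma adm_mono:
  assumes "admissible \<gamma>" "0 \<le> s" "s \<le> t" "t \<le> 1"
  shows "\<gamma> s $ i \<le> \<gamma> t $ i"
proof -
  have "0 \<le> \<gamma> t $ i - \<gamma> s $ i"
    by (rule has_integral_nonneg[OF adm_ftc_comp[OF assms]]) (use assms adm_gd_nonneg[OF assms(1)] in auto)
  then show ?thesis by simp
qed

lemma adm_leqq: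
  assumes "admissible \<gamma>" "0 \<le> s" "s \<le> t" "t \<le> 1"
  shows "leqq (\<gamma> s) (\<gamma> t)"
  unfolding leqq_def using adm_mono[OF assms] by blast

lemma adm_zero_deriv:
  assumes "admissible \<gamma>" "0 \<le> s" "s < t" "t \<le> 1" "\<gamma> s $ i = \<gamma> t $ i" "x \<in> {s..t}"
  shows "gd \<gamma> x $ i = 0"
proof -
  have c: "continuous_on {s..t} (\<lambda>x. gd \<gamma> x $ i)"
    by (rule continuous_on_component, rule continuous_on_subset[OF adm_gd_cont[OF assms(1)]]) (use assms in auto)
  have h: "((\<lambda>x. gd \<gamma> x $ i) has_integral 0) {s..t}"
    using adm_ftc_comp[OF assms(1,2) less_imp_le[OF assms(3)] assms(4), of i] assms(5) by simp
  show ?thesis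
    by (rule has_integral_0_cbox_imp_0[of s t "\<lambda>x. gd \<gamma> x $ i"]) (use c h assms adm_gd_nonneg[OF assms(1)] in auto)
qed

lemma closure_bound:
  fixes g :: "real \<Rightarrow> real"
  assumes g: "continuous_on {0..1} g" and pr: "0 \<le> p" "p < r" "r \<le> 1"
  shows closure_bound_ge: "(\<forall>t\<in>{p<..<r}. c \<le> g t) \<Longrightarrow> c \<le> g p \<and> c \<le> g r"
    and closure_bound_le: "(\<forall>t\<in>{p<..<r}. g t \<le> c) \<Longrightarrow> g p \<le> c \<and> g r \<le> c"
proof -
  have gc: "continuous_on {p..r} g" by (rule continuous_on_subset[OF g]) (use pr in auto)
  have cl1: "closed {x\<in>{p..r}. c \<le> g x}"
    by (rule continuous_on_closed_Collect_le) (auto intro: gc continuous_on_const)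
  have cl2: "closed {x\<in>{p..r}. g x \<le> c}"
    by (rule continuous_on_closed_Collect_le) (auto intro: gc continuous_on_const)
  have pr': "p \<in> closure {p<..<r}" "r \<in> closure {p<..<r}" using pr by auto
  show "(\<forall>t\<in>{p<..<r}. c \<le> g t) \<Longrightarrow> c \<le> g p \<and> c \<le> g r"
  proof -
    assume h: "\<forall>t\<in>{p<..<r}. c \<le> g t"
    have "{p<..<r} \<subseteq> {x\<in>{p..r}. c \<le> g x}" using h by auto
    then have "closure {p<..<r} \<subseteq> {x\<in>{p..r}. c \<le> g x}" using cl1 by (rule closure_minimal)
    then show ?thesis using pr' by auto
  qed
  show "(\<forall>t\<in>{p<..<r}. g t \<le> c) \<Longrightarrow> g p \<le> c \<and> g r \<le> c"
  proof -
    assume h: "\<forall>t\<in>{p<..<r}. g t \<le> c"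
    have "{p<..<r} \<subseteq> {x\<in>{p..r}. g x \<le> c}" using h by auto
    then have "closure {p<..<r} \<subseteq> {x\<in>{p..r}. g x \<le> c}" using cl2 by (rule closure_minimal)
    then show ?thesis using pr' by auto
  qed
qed


definition Lo :: "(real \<Rightarrow> real^'d) \<Rightarrow> 'd \<Rightarrow> real \<Rightarrow> real set" where
  "Lo \<gamma> i c = {t\<in>{0..1}. \<gamma> t $ i \<le> c}"
definition Hi :: "(real \<Rightarrow> real^'d) \<Rightarrow> 'd \<Rightarrow> real \<Rightarrow> real set" where
  "Hi \<gamma> i c = {t\<in>{0..1}. c \<le> \<gamma> t $ i}"
definition brk :: "(real \<Rightarrow> real^'d) \<Rightarrow> nat \<Rightarrow> real set" where
  "brk \<gamma> L = ({0,1} \<union> (\<Union>i. \<Union>k\<in>{0..L}. {Sup (Lo \<gamma> i (real k / real L)), Inf (Hi \<gamma> i (real k / real L))})) \<inter> {0..1}"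

lemma finite_brk: "finite (brk \<gamma> L)"
  unfolding brk_def by auto

lemma brk_01: "0 \<in> brk \<gamma> L" "1 \<in> brk \<gamma> L" "brk \<gamma> L \<subseteq> {0..1}"
  unfolding brk_def by auto

lemma sign_le:
  assumes adm: "admissible \<gamma>" and pr: "0 \<le> p" "p < r" "r \<le> 1"
    and nb: "\<forall>t\<in>brk \<gamma> L. \<not> (p < t \<and> t < r)" and k: "k \<in> {0..L}"
    and t: "t1 \<in> {p<..<r}" "t2 \<in> {p<..<r}" and h: "\<gamma> t1 $ i \<le> real k / real L"
  shows "\<gamma> t2 $ i \<le> real k / real L"
proof (cases "t2 \<le> t1")
  case True then show ?thesis using adm_mono[OF adm, of t2 t1 i] t pr h by auto
next
  case False
  define c where "c = real k / real L"
  define e where "e = Sup (Lo \<gamma> i c)"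
  have t1Lo: "t1 \<in> Lo \<gamma> i c" using t pr h unfolding Lo_def c_def by auto
  have bdd: "bdd_above (Lo \<gamma> i c)" unfolding Lo_def by (rule bdd_aboveI[of _ 1]) auto
  have e1: "t1 \<le> e" unfolding e_def by (rule cSup_upper[OF t1Lo bdd])
  have e2: "e \<le> 1" unfolding e_def by (rule cSup_least) (use t1Lo in \<open>auto simp: Lo_def\<close>)
  have "e \<in> (\<Union>i'. \<Union>k'\<in>{0..L}. {Sup (Lo \<gamma> i' (real k' / real L)), Inf (Hi \<gamma> i' (real k' / real L))})"
    using k unfolding e_def c_def by blast
  then have eb: "e \<in> brk \<gamma> L" unfolding brk_def using e1 e2 t pr by auto
  have "\<not> e < r" using nb eb e1 t by force
  then have "t2 < Sup (Lo \<gamma> i c)" using t unfolding e_def by auto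
  then obtain s where s: "s \<in> Lo \<gamma> i c" "t2 < s" using less_cSup_iff[OF _ bdd] t1Lo by blast
  have "\<gamma> t2 $ i \<le> \<gamma> s $ i" using adm_mono[OF adm, of t2 s i] s t pr unfolding Lo_def by auto
  then show ?thesis using s unfolding Lo_def c_def by auto
qed

lemma sign_ge:
  assumes adm: "admissible \<gamma>" and pr: "0 \<le> p" "p < r" "r \<le> 1"
    and nb: "\<forall>t\<in>brk \<gamma> L. \<not> (p < t \<and> t < r)" and k: "k \<in> {0..L}"
    and t: "t1 \<in> {p<..<r}" "t2 \<in> {p<..<r}" and h: "real k / real L \<le> \<gamma> t1 $ i"
  shows "real k / real L \<le> \<gamma> t2 $ i"
proof (cases "t1 \<le> t2")
  case True then show ?thesis using adm_mono[OF adm, of t1 t2 i] t pr h by auto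
next
  case False
  define c where "c = real k / real L"
  define e where "e = Inf (Hi \<gamma> i c)"
  have t1Hi: "t1 \<in> Hi \<gamma> i c" using t pr h unfolding Hi_def c_def by auto
  have bdd: "bdd_below (Hi \<gamma> i c)" unfolding Hi_def by (rule bdd_belowI[of _ 0]) auto
  have e1: "e \<le> t1" unfolding e_def by (rule cInf_lower[OF t1Hi bdd])
  have e2: "0 \<le> e" unfolding e_def by (rule cInf_greatest) (use t1Hi in \<open>auto simp: Hi_def\<close>)
  have "e \<in> (\<Union>i'. \<Union>k'\<in>{0..L}. {Sup (Lo \<gamma> i' (real k' / real L)), Inf (Hi \<gamma> i' (real k' / real L))})"
    using k unfolding e_def c_def by blast
  then have eb: "e \<in> brk \<gamma> L" unfolding brk_def using e1 e2 t pr by auto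
  have "\<not> p < e" using nb eb e1 t by force
  then have "Inf (Hi \<gamma> i c) < t2" using t unfolding e_def by auto
  then obtain s where s: "s \<in> Hi \<gamma> i c" "s < t2" using cInf_less_iff[OF _ bdd] t1Hi by blast
  have "\<gamma> s $ i \<le> \<gamma> t2 $ i" using adm_mono[OF adm, of s t2 i] s t pr unfolding Hi_def by auto
  then show ?thesis using s unfolding Hi_def c_def by auto
qed


definition Dg :: "(real \<Rightarrow> real^'d) \<Rightarrow> real \<Rightarrow> real" where
  "Dg \<gamma> t = (\<Prod>i\<in>UNIV. gd \<gamma> t $ i) powr (1 / real CARD('d))"
definition Fg :: "(real^'d \<Rightarrow> real) \<Rightarrow> (real \<Rightarrow> real^'d) \<Rightarrow> real \<Rightarrow> real" where
  "Fg f \<gamma> t = ext0 f (\<gamma> t) powr (1 / real CARD('d)) * Dg \<gamma> t"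

lemma Jfun_eq: "Jfun f \<gamma> = integral {0..1} (Fg f \<gamma>)"
  unfolding Jfun_def Fg_def Dg_def gd_def by simp

lemma G4:
  fixes \<gamma> :: "real \<Rightarrow> real^'d"
  assumes adm: "admissible \<gamma>" and pr: "0 \<le> p" "p < r" "r \<le> 1"
    and Dp: "\<forall>i. \<gamma> p $ i < \<gamma> r $ i" and c0: "c0 \<ge> 0"
    and Fi: "F integrable_on {p..r}" and Fe: "\<forall>t\<in>{p<..<r}. F t = c0 * Dg \<gamma> t"
  shows "integral {p..r} F \<le> c0 * (\<Prod>i\<in>UNIV. \<gamma> r $ i - \<gamma> p $ i) powr (1 / real CARD('d))"
proof -
  define \<Delta> where "\<Delta> i = \<gamma> r $ i - \<gamma> p $ i" for i
  define d where "d = real CARD('d)"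
  have Dpos: "\<Delta> i > 0" for i using Dp unfolding \<Delta>_def by simp
  have dpos: "d > 0" unfolding d_def by simp
  define K where "K = c0 * (\<Prod>i\<in>UNIV. \<Delta> i) powr (1/d) / d"
  define Bf where "Bf t = K * (\<Sum>i\<in>UNIV. (1 / \<Delta> i) * gd \<gamma> t $ i)" for t
  have hB: "(Bf has_integral K * (\<Sum>i\<in>UNIV. (1 / \<Delta> i) * \<Delta> i)) {p..r}"
  proof -
    have hc: "((\<lambda>t. gd \<gamma> t $ i) has_integral \<Delta> i) {p..r}" for i
      unfolding \<Delta>_def by (rule adm_ftc_comp[OF adm pr(1) less_imp_le[OF pr(2)] pr(3)])
    show ?thesis unfolding Bf_def
      by (intro has_integral_mult_right has_integral_sum) (auto intro: hc)
  qed
  have sum1: "(\<Sum>i\<in>UNIV. (1 / \<Delta> i) * \<Delta> i) = d"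
    using Dpos unfolding d_def by (simp add: less_imp_neq[symmetric])
  have intB: "integral {p..r} Bf = c0 * (\<Prod>i\<in>UNIV. \<Delta> i) powr (1/d)"
    using hB unfolding sum1 K_def using dpos by (simp add: integral_unique)
  have pt: "F t \<le> Bf t" if t: "t \<in> {p<..<r}" for t
  proof -
    have t01: "t \<in> {0..1}" using t pr by auto
    define z where "z i = gd \<gamma> t $ i / \<Delta> i" for i
    have znn: "z i \<ge> 0" for i unfolding z_def using adm_gd_nonneg[OF adm t01] Dpos by (simp add: less_imp_le)
    have gz: "gd \<gamma> t $ i = \<Delta> i * z i" for i unfolding z_def using Dpos by (simp add: less_imp_neq[symmetric])
    have "Dg \<gamma> t = (\<Prod>i\<in>UNIV. \<Delta> i * z i) powr (1/d)" unfolding Dg_def d_def using gz by simp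
    also have "\<dots> = (\<Prod>i\<in>UNIV. \<Delta> i) powr (1/d) * (\<Prod>i\<in>UNIV. z i) powr (1/d)"
      by (simp add: prod.distrib powr_mult prod_nonneg Dpos less_imp_le znn)
    also have "(\<Prod>i\<in>UNIV. z i) powr (1/d) \<le> (\<Sum>i\<in>UNIV. z i / d)"
      unfolding d_def using arith_geom_mean[of UNIV z] znn by simp
    finally have "Dg \<gamma> t \<le> (\<Prod>i\<in>UNIV. \<Delta> i) powr (1/d) * (\<Sum>i\<in>UNIV. z i / d)"
      by (simp add: mult_left_mono)
    then have "c0 * Dg \<gamma> t \<le> c0 * ((\<Prod>i\<in>UNIV. \<Delta> i) powr (1/d) * (\<Sum>i\<in>UNIV. z i / d))"
      using c0 by (rule mult_left_mono)
    also have "\<dots> = Bf t"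
    proof -
      have e1: "(\<Sum>i\<in>UNIV. z i / d) = (\<Sum>i\<in>UNIV. z i) / d" by (simp add: sum_divide_distrib)
      have e2: "(\<Sum>i\<in>UNIV. (1 / \<Delta> i) * gd \<gamma> t $ i) = (\<Sum>i\<in>UNIV. z i)" by (simp add: z_def)
      show ?thesis unfolding Bf_def K_def e1 e2 by simp
    qed
    finally show ?thesis using Fe t by simp
  qed
  have "integral {p..r} F = integral {p<..<r} F" by (rule integral_open_interval_real)
  also have "\<dots> \<le> integral {p<..<r} Bf"
  proof (rule integral_le)
    show "F integrable_on {p<..<r}" using Fi integrable_on_open_interval_real by blast
    have "Bf integrable_on {p..r}" using hB by (rule has_integral_integrable)
    then show "Bf integrable_on {p<..<r}" using integrable_on_open_interval_real by blast
  qed (use pt in auto)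
  also have "\<dots> = integral {p..r} Bf" by (rule integral_open_interval_real[symmetric])
  finally show ?thesis unfolding intB \<Delta>_def d_def .
qed


lemma integral_zero_open:
  fixes p r :: real
  assumes "\<forall>t\<in>{p<..<r}. F t = (0::real)"
  shows "integral {p..r} F = 0"
proof -
  have "integral {p..r} F = integral {p<..<r} F" by (rule integral_open_interval_real)
  also have "\<dots> = integral {p<..<r} (\<lambda>_. 0::real)" by (rule integral_cong) (use assms in auto)
  finally show ?thesis by simp
qed

lemma interval_bound:
  fixes f :: "real^'d \<Rightarrow> real" and \<gamma> :: "real \<Rightarrow> real^'d"
  assumes adm: "admissible \<gamma>" and L: "L \<ge> 1" and pc: "piecewise_const L f"
    and fnn: "\<forall>x\<in>unit_cube. f x \<ge> 0"
    and pr: "0 \<le> p" "p < r" "r \<le> 1" and nb: "\<forall>t\<in>brk \<gamma> L. \<not> (p < t \<and> t < r)"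
    and Fi: "Fg f \<gamma> integrable_on {p..r}"
  shows "integral {p..r} (Fg f \<gamma>) \<le> 0 \<or>
    (\<exists>a>0. (\<forall>i. \<gamma> p $ i < \<gamma> r $ i) \<and> (\<forall>x\<in>box (\<gamma> p) (\<gamma> r). ext0 f x = a) \<and>
       integral {p..r} (Fg f \<gamma>) \<le> (a * (\<Prod>i\<in>UNIV. \<gamma> r $ i - \<gamma> p $ i)) powr (1 / real CARD('d)))"
proof -
  define m where "m = (p + r) / 2"
  have m: "m \<in> {p<..<r}" using pr unfolding m_def by auto
  define x where "x = \<gamma> m"
  have Lpos: "real L > 0" using L by simp
  have zero: "integral {p..r} (Fg f \<gamma>) \<le> 0" if "\<forall>t\<in>{p<..<r}. Fg f \<gamma> t = 0"
    using integral_zero_open[OF that] by simp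
  have zeroD: "\<forall>t\<in>{p<..<r}. Dg \<gamma> t = 0" if i: "\<forall>t\<in>{p<..<r}. gd \<gamma> t $ i = 0" for i
  proof
    fix t assume "t \<in> {p<..<r}"
    then have "gd \<gamma> t $ i = 0" using i by blast
    then have "(\<Prod>i\<in>UNIV. gd \<gamma> t $ i) = 0" by (intro prod_zero) auto
    then show "Dg \<gamma> t = 0" unfolding Dg_def by simp
  qed
  have zeroFD: "\<forall>t\<in>{p<..<r}. Fg f \<gamma> t = 0" if "\<forall>t\<in>{p<..<r}. Dg \<gamma> t = 0"
    using that unfolding Fg_def by simp
  have cont: "continuous_on {0..1} (\<lambda>t. \<gamma> t $ i)" for i by (rule continuous_on_component[OF adm_cont[OF adm]])
  have sle: "\<gamma> t $ i \<le> real k / real L" if "k \<in> {0..L}" "t \<in> {p<..<r}" "x $ i \<le> real k / real L" for t i k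
    by (rule sign_le[OF adm pr nb that(1) m that(2)]) (use that(3) in \<open>simp add: x_def\<close>)
  have sge: "real k / real L \<le> \<gamma> t $ i" if "k \<in> {0..L}" "t \<in> {p<..<r}" "real k / real L \<le> x $ i" for t i k
    by (rule sign_ge[OF adm pr nb that(1) m that(2)]) (use that(3) in \<open>simp add: x_def\<close>)
  have sle': "x $ i \<le> real k / real L" if "k \<in> {0..L}" "t \<in> {p<..<r}" "\<gamma> t $ i \<le> real k / real L" for t i k
    using sign_le[OF adm pr nb that(1) that(2) m that(3)] by (simp add: x_def)
  have sge': "real k / real L \<le> x $ i" if "k \<in> {0..L}" "t \<in> {p<..<r}" "real k / real L \<le> \<gamma> t $ i" for t i k
    using sign_ge[OF adm pr nb that(1) that(2) m that(3)] by (simp add: x_def)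
  show ?thesis
  proof (cases "\<exists>i. \<exists>k\<in>{0..L}. x $ i = real k / real L")
    case True
    then obtain i k where ik: "k \<in> {0..L}" "x $ i = real k / real L" by blast
    have const: "\<gamma> t $ i = real k / real L" if "t \<in> {p<..<r}" for t
      using sle[OF ik(1) that, where i=i] sge[OF ik(1) that, where i=i] ik(2) by force
    have "\<forall>t\<in>{p<..<r}. gd \<gamma> t $ i = 0"
    proof
      fix t assume t: "t \<in> {p<..<r}"
      define s1 where "s1 = (p + t) / 2"
      define s2 where "s2 = (t + r) / 2"
      have s: "s1 \<in> {p<..<r}" "s2 \<in> {p<..<r}" "s1 < s2" "t \<in> {s1..s2}" using t unfolding s1_def s2_def by auto
      show "gd \<gamma> t $ i = 0"
        by (rule adm_zero_deriv[OF adm _ s(3) _ _ s(4)]) (use s pr const in auto)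
    qed
    then show ?thesis using zero zeroFD zeroD by blast
  next
    case notA: False
    show ?thesis
    proof (cases "\<exists>i. x $ i < 0 \<or> x $ i > 1")
      case True
      then obtain i where i: "x $ i < 0 \<or> x $ i > 1" by blast
      have "\<gamma> t \<notin> unit_cube" if t: "t \<in> {p<..<r}" for t
      proof
        assume "\<gamma> t \<in> unit_cube"
        then have c: "0 \<le> \<gamma> t $ i" "\<gamma> t $ i \<le> 1" unfolding unit_cube_def by (auto simp: less_imp_le)
        have "0 \<le> x $ i" using sge'[of 0 t i] t c by simp
        moreover have "x $ i \<le> 1" using sle'[of L t i] t c Lpos by simp
        ultimately show False using i by simp
      qed
      then have "\<forall>t\<in>{p<..<r}. Fg f \<gamma> t = 0" unfolding Fg_def ext0_def by simp
      then show ?thesis using zero by blast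
    next
      case notB: False
      define k where "k i = nat \<lfloor>real L * x $ i\<rfloor>" for i
      define \<alpha> where "\<alpha> i = Suc (k i)" for i
      have xr: "0 \<le> x $ i" "x $ i \<le> 1" for i using notB by (auto simp: not_less)
      have kprops: "k i \<in> {0..L}" "Suc (k i) \<in> {0..L}" "real (k i) / real L < x $ i" "x $ i < real (Suc (k i)) / real L" for i
      proof -
        have fl: "real_of_int \<lfloor>real L * x $ i\<rfloor> \<le> real L * x $ i" "real L * x $ i < real_of_int \<lfloor>real L * x $ i\<rfloor> + 1"
          by linarith+
        have fl0: "0 \<le> \<lfloor>real L * x $ i\<rfloor>" using xr[of i] Lpos by simp
        have kk: "real (k i) = real_of_int \<lfloor>real L * x $ i\<rfloor>" unfolding k_def using fl0 by simp
        have "L \<in> {0..L}" by simp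
        then have "x $ i \<noteq> real L / real L" using notA by blast
        then have x1: "x $ i \<noteq> 1" using Lpos by simp
        then have x1': "x $ i < 1" using xr[of i] by simp
        have "real L * x $ i < real L" using mult_strict_left_mono[OF x1' Lpos] by simp
        then have "real (k i) < real L" using fl(1) kk by linarith
        then show "k i \<in> {0..L}" "Suc (k i) \<in> {0..L}" by auto
        have "x $ i \<noteq> real (k i) / real L" using notA \<open>k i \<in> {0..L}\<close> by blast
        moreover have "real (k i) / real L \<le> x $ i" using fl(1) kk Lpos by (simp add: divide_le_eq mult.commute)
        ultimately show "real (k i) / real L < x $ i" by simp
        have "real L * x $ i < real (Suc (k i))" using fl(2) kk by linarith
        then show "x $ i < real (Suc (k i)) / real L" using Lpos by (simp add: less_divide_eq mult.commute)
      qed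
      define OC where "OC = {y::real^'d. \<forall>i. real (k i) / real L < y $ i \<and> y $ i < real (Suc (k i)) / real L}"
      have inOC: "\<gamma> t \<in> OC" if t: "t \<in> {p<..<r}" for t
        unfolding OC_def
      proof (intro CollectI allI)
        fix i
        have "real (k i) / real L \<le> \<gamma> t $ i" using sge[OF kprops(1) t, where i=i] kprops(3)[of i] by simp
        moreover have "\<gamma> t $ i \<noteq> real (k i) / real L"
          using sle'[OF kprops(1) t, where i=i] kprops(3)[of i] by force
        moreover have "\<not> real (Suc (k i)) / real L \<le> \<gamma> t $ i"
          using sge'[OF kprops(2) t, where i=i] kprops(4)[of i] by force
        ultimately show "real (k i) / real L < \<gamma> t $ i \<and> \<gamma> t $ i < real (Suc (k i)) / real L" by simp
      qed
      have OCQ: "OC \<subseteq> Qcube L \<alpha>"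
      proof
        fix y assume y: "y \<in> OC"
        have a1: "real (k i) < real L * y $ i" "real L * y $ i < real (Suc (k i))" for i
          using y Lpos unfolding OC_def by (auto simp: divide_less_eq less_divide_eq mult.commute)
        have "y \<in> unit_cube" unfolding unit_cube_def
        proof (intro CollectI allI conjI)
          fix i
          have "0 \<le> real (k i)" by simp
          then have "0 < real L * y $ i" using a1(1)[of i] by linarith
          then show "0 \<le> y $ i" using Lpos by (simp add: zero_less_mult_iff)
          have "real (Suc (k i)) \<le> real L" using kprops(2)[of i] by simp
          then have "real L * y $ i < real L * 1" using a1(2)[of i] by linarith
          then show "y $ i < 1" using mult_less_cancel_left_pos[OF Lpos] by blast
        qed
        then show "y \<in> Qcube L \<alpha>" unfolding Qcube_def \<alpha>_def using a1 by (auto simp: less_imp_le)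
      qed
      have "\<exists>c. \<forall>y\<in>Qcube L \<alpha>. f y = c"
        using pc unfolding piecewise_const_def using kprops(2) by (auto simp: \<alpha>_def)
      then obtain a where a: "\<forall>y\<in>Qcube L \<alpha>. f y = a" by blast
      have QU: "Qcube L \<alpha> \<subseteq> unit_cube" unfolding Qcube_def by auto
      have extOC: "ext0 f y = a" if "y \<in> OC" for y using that OCQ QU a unfolding ext0_def by auto
      have xOC: "x \<in> OC" using inOC[OF m] by (simp add: x_def)
      have anneg: "a \<ge> 0" using fnn extOC[OF xOC] xOC OCQ QU unfolding ext0_def by (auto split: if_splits)
      have Feq: "\<forall>t\<in>{p<..<r}. Fg f \<gamma> t = a powr (1 / real CARD('d)) * Dg \<gamma> t"
        using inOC extOC unfolding Fg_def by simp
      have boxOC: "box (\<gamma> p) (\<gamma> r) \<subseteq> OC"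
      proof
        fix y assume y: "y \<in> box (\<gamma> p) (\<gamma> r)"
        show "y \<in> OC" unfolding OC_def
        proof (intro CollectI allI)
          fix i
          have l: "real (k i) / real L \<le> \<gamma> p $ i"
            using closure_bound_ge[OF cont pr, of "real (k i) / real L" i] inOC unfolding OC_def by (auto simp: less_imp_le)
          have u: "\<gamma> r $ i \<le> real (Suc (k i)) / real L"
            using closure_bound_le[OF cont pr, of i "real (Suc (k i)) / real L"] inOC unfolding OC_def by (auto simp: less_imp_le)
          show "real (k i) / real L < y $ i \<and> y $ i < real (Suc (k i)) / real L"
          proof -
            have "\<gamma> p $ i < y $ i \<and> y $ i < \<gamma> r $ i" using y by (simp add: mem_box_cart)
            then show ?thesis using l u by linarith
          qed
        qed
      qed
      show ?thesis
      proof (cases "a = 0 \<or> (\<exists>i. \<gamma> p $ i = \<gamma> r $ i)")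
        case True
        then show ?thesis
        proof
          assume "a = 0"
          then have "\<forall>t\<in>{p<..<r}. Fg f \<gamma> t = 0" using Feq by simp
          then show ?thesis using zero by blast
        next
          assume "\<exists>i. \<gamma> p $ i = \<gamma> r $ i"
          then obtain i where i: "\<gamma> p $ i = \<gamma> r $ i" by blast
          have "\<forall>t\<in>{p<..<r}. gd \<gamma> t $ i = 0"
            using adm_zero_deriv[OF adm pr(1,2,3) i] by auto
          then show ?thesis using zero zeroFD zeroD by blast
        qed
      next
        case False
        then have apos: "a > 0" and Dp: "\<forall>i. \<gamma> p $ i < \<gamma> r $ i"
          using anneg adm_mono[OF adm pr(1) less_imp_le[OF pr(2)] pr(3)] by (auto simp: order.order_iff_strict)
        have "integral {p..r} (Fg f \<gamma>) \<le> a powr (1 / real CARD('d)) * (\<Prod>i\<in>UNIV. \<gamma> r $ i - \<gamma> p $ i) powr (1 / real CARD('d))"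
          by (rule G4[OF adm pr Dp _ Fi Feq]) simp
        also have "\<dots> = (a * (\<Prod>i\<in>UNIV. \<gamma> r $ i - \<gamma> p $ i)) powr (1 / real CARD('d))"
          using apos Dp by (simp add: powr_mult prod_nonneg less_imp_le)
        finally show ?thesis using apos Dp boxOC extOC by blast
      qed
    qed
  qed
qed


lemma integral_sum_nth:
  fixes F :: "real \<Rightarrow> real"
  assumes "sorted xs" "xs \<noteq> []" "F integrable_on {xs!0..xs!(length xs - 1)}"
  shows "integral {xs!0..xs!(length xs - 1)} F = (\<Sum>j<length xs - 1. integral {xs!j..xs!(Suc j)} F)"
  using assms
proof (induction xs)
  case Nil then show ?case by simp
next
  case (Cons x xs)
  show ?case
  proof (cases "xs = []")
    case True
    then show ?thesis by (simp add: integral_unique[OF has_integral_refl(2)])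
  next
    case False
    have s: "sorted xs" using Cons.prems by simp
    have lx: "length xs \<ge> 1" using False by (cases xs) auto
    have xy: "x \<le> xs!0" using Cons.prems(1) False by (cases xs) auto
    have yl: "xs!0 \<le> xs!(length xs - 1)" using sorted_nth_mono[OF s, of 0 "length xs - 1"] lx by simp
    have last: "(x#xs)!(length (x#xs) - 1) = xs!(length xs - 1)" using lx by (cases "length xs") auto
    have Fi: "F integrable_on {x..xs!(length xs - 1)}" using Cons.prems(3) last by simp
    have Fi2: "F integrable_on {xs!0..xs!(length xs - 1)}"
      by (rule integrable_subinterval_real[OF Fi]) (use xy in auto)
    have "integral {x..xs!(length xs - 1)} F = integral {x..xs!0} F + integral {xs!0..xs!(length xs - 1)} F"
      using Henstock_Kurzweil_Integration.integral_combine[OF xy yl Fi] by simp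
    also have "integral {xs!0..xs!(length xs - 1)} F = (\<Sum>j<length xs - 1. integral {xs!j..xs!(Suc j)} F)"
      by (rule Cons.IH[OF s False Fi2])
    also have "integral {x..xs!0} F + (\<Sum>j<length xs - 1. integral {xs!j..xs!(Suc j)} F)
        = (\<Sum>j<length (x#xs) - 1. integral {(x#xs)!j..(x#xs)!(Suc j)} F)"
    proof -
      have "length (x#xs) - 1 = Suc (length xs - 1)" using lx by simp
      then show ?thesis by (simp only: sum.lessThan_Suc_shift) simp
    qed
    finally show ?thesis using last by simp
  qed
qed


lemma geom:
  fixes f :: "real^'d \<Rightarrow> real" and \<gamma> :: "real \<Rightarrow> real^'d"
  assumes adm: "admissible \<gamma>" and L: "L \<ge> 1" and pc: "piecewise_const L f"
    and fnn: "\<forall>x\<in>unit_cube. f x \<ge> 0"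
  shows "\<exists>(u::nat \<Rightarrow> real^'d) v (a::nat \<Rightarrow> real) G. finite G \<and>
     (\<forall>j\<in>G. (\<forall>i. u j $ i < v j $ i) \<and> a j > 0 \<and> (\<forall>x\<in>box (u j) (v j). ext0 f x = a j)) \<and>
     (\<forall>j\<in>G. \<forall>j'\<in>G. j < j' \<longrightarrow> (\<forall>i. v j $ i \<le> u j' $ i)) \<and>
     Jfun f \<gamma> \<le> (\<Sum>j\<in>G. (a j * (\<Prod>i\<in>UNIV. v j $ i - u j $ i)) powr (1 / real CARD('d)))"
proof -
  define ts where "ts = sorted_list_of_set (brk \<gamma> L)"
  define n where "n = length ts"
  have fin: "finite (brk \<gamma> L)" by (rule finite_brk)
  have sts: "set ts = brk \<gamma> L" unfolding ts_def using fin by simp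
  have srt: "sorted ts" unfolding ts_def by simp
  have ssrt: "sorted_wrt (<) ts" unfolding ts_def by (rule strict_sorted_list_of_set)
  have in01: "ts ! j \<in> {0..1}" if "j < n" for j
    using brk_01(3) sts that unfolding n_def by (metis nth_mem subsetD)
  have ne: "ts \<noteq> []" using sts brk_01(1)[of \<gamma> L] by auto
  have npos: "n \<ge> 1" using ne unfolding n_def by (cases ts) auto
  have ts0: "ts ! 0 = 0"
  proof -
    obtain k where k: "k < n" "ts ! k = 0" using brk_01(1) sts unfolding n_def by (metis in_set_conv_nth)
    have "ts ! 0 \<le> ts ! k" using sorted_nth_mono[OF srt, of 0 k] k unfolding n_def by simp
    then show ?thesis using in01[of 0] npos k by simp
  qed
  have tsn: "ts ! (n - 1) = 1"
  proof -
    obtain k where k: "k < n" "ts ! k = 1" using brk_01(2) sts unfolding n_def by (metis in_set_conv_nth)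
    have "ts ! k \<le> ts ! (n - 1)" using sorted_nth_mono[OF srt, of k "n - 1"] k npos unfolding n_def by simp
    then show ?thesis using in01[of "n - 1"] npos k by simp
  qed
  define K where "K = n - 1"
  have lt: "ts ! j < ts ! (Suc j)" if "j < K" for j
    using sorted_wrt_nth_less[OF ssrt, of j "Suc j"] that unfolding K_def n_def by simp
  have nb: "\<forall>t\<in>brk \<gamma> L. \<not> (ts ! j < t \<and> t < ts ! (Suc j))" if j: "j < K" for j
  proof
    fix t assume "t \<in> brk \<gamma> L"
    then obtain k where k: "k < n" "t = ts ! k" using sts unfolding n_def by (metis in_set_conv_nth)
    show "\<not> (ts ! j < t \<and> t < ts ! (Suc j))"
    proof (cases "k \<le> j")
      case True
      have "j < length ts" using j unfolding K_def n_def by simp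
      then have "ts ! k \<le> ts ! j" using sorted_nth_mono[OF srt True] by simp
      then show ?thesis using k by simp
    next
      case False then have "Suc j \<le> k" by simp
      then show ?thesis using sorted_nth_mono[OF srt, of "Suc j" k] k j unfolding K_def n_def by simp
    qed
  qed
  define u where "u j = \<gamma> (ts ! j)" for j
  define v where "v j = \<gamma> (ts ! (Suc j))" for j
  define I where "I j = integral {ts ! j..ts ! (Suc j)} (Fg f \<gamma>)" for j
  define P where "P j a \<longleftrightarrow> a > 0 \<and> (\<forall>i. u j $ i < v j $ i) \<and> (\<forall>x\<in>box (u j) (v j). ext0 f x = a) \<and>
       I j \<le> (a * (\<Prod>i\<in>UNIV. v j $ i - u j $ i)) powr (1 / real CARD('d))" for j a
  define G where "G = {j. j < K \<and> (\<exists>a. P j a)}"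
  define a where "a j = (SOME a. P j a)" for j
  have aP: "P j (a j)" if "j \<in> G" for j using that unfolding G_def a_def by (auto intro: someI_ex)
  have finG: "finite G" unfolding G_def by simp
  have ord: "\<forall>j\<in>G. \<forall>j'\<in>G. j < j' \<longrightarrow> (\<forall>i. v j $ i \<le> u j' $ i)"
  proof (intro ballI impI allI)
    fix j j' i assume jj: "j \<in> G" "j' \<in> G" "j < j'"
    have "ts ! (Suc j) \<le> ts ! j'" using sorted_nth_mono[OF srt, of "Suc j" j'] jj unfolding G_def K_def n_def by auto
    moreover have "Suc j < n" "j' < n" using jj unfolding G_def K_def by auto
    ultimately show "v j $ i \<le> u j' $ i" unfolding u_def v_def using in01 by (intro adm_mono[OF adm]) auto
  qed
  have J: "Jfun f \<gamma> \<le> (\<Sum>j\<in>G. (a j * (\<Prod>i\<in>UNIV. v j $ i - u j $ i)) powr (1 / real CARD('d)))"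
  proof (cases "Fg f \<gamma> integrable_on {0..1}")
    case False
    then have "Jfun f \<gamma> = 0" unfolding Jfun_eq by (rule not_integrable_integral)
    then show ?thesis by (simp add: sum_nonneg)
  next
    case True
    have "Jfun f \<gamma> = (\<Sum>j<K. I j)"
      unfolding Jfun_eq I_def K_def n_def using integral_sum_nth[OF srt ne, of "Fg f \<gamma>"] True ts0 tsn
      unfolding n_def by simp
    also have "\<dots> = (\<Sum>j\<in>G. I j) + (\<Sum>j\<in>{..<K} - G. I j)"
      by (subst sum.subset_diff[of G]) (auto simp: G_def add.commute)
    also have "(\<Sum>j\<in>{..<K} - G. I j) \<le> 0"
    proof (rule sum_nonpos)
      fix j assume j: "j \<in> {..<K} - G"
      have jn: "j < K" using j by simp
      have pr: "0 \<le> ts ! j" "ts ! j < ts ! (Suc j)" "ts ! (Suc j) \<le> 1"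
        using in01[of j] in01[of "Suc j"] lt[OF jn] jn unfolding K_def by auto
      have Fi: "Fg f \<gamma> integrable_on {ts ! j..ts ! (Suc j)}"
        by (rule integrable_subinterval_real[OF True]) (use pr in auto)
      from interval_bound[OF adm L pc fnn pr nb[OF jn] Fi]
      show "I j \<le> 0" using j unfolding G_def P_def I_def u_def v_def by auto
    qed
    also have "(\<Sum>j\<in>G. I j) \<le> (\<Sum>j\<in>G. (a j * (\<Prod>i\<in>UNIV. v j $ i - u j $ i)) powr (1 / real CARD('d)))"
      by (rule sum_mono) (use aP in \<open>auto simp: P_def\<close>)
    finally show ?thesis by simp
  qed
  show ?thesis
    by (rule exI[of _ u], rule exI[of _ v], rule exI[of _ a], rule exI[of _ G])
       (use finG ord J aP in \<open>auto simp: P_def\<close>)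
qed


lemma per_gamma:
  fixes M :: "'a measure" and X :: "nat \<Rightarrow> 'a \<Rightarrow> real^'d"
    and f :: "real^'d \<Rightarrow> real" and L :: nat and c :: real
  assumes L: "L \<ge> 1" and fnn: "\<forall>x\<in>unit_cube. f x \<ge> 0" and pc: "piecewise_const L f"
    and M: "prob_space M" and ind: "prob_space.indep_vars M (\<lambda>_. borel) X UNIV"
    and dis: "\<And>i. distributed M lborel (X i) (\<lambda>x. ennreal (ext0 f x))"
    and cd: "is_cd TYPE('d) c" and adm: "admissible \<gamma>"
  shows "AE \<omega> in M. liminf (\<lambda>n. ereal (real n powr (- 1 / real CARD('d)) *
                      real (lchain ((\<lambda>i. X i \<omega>) ` {..<n})))) \<ge> ereal (c * Jfun f \<gamma>)"
proof -
  obtain u v :: "nat \<Rightarrow> real^'d" and a :: "nat \<Rightarrow> real" and G :: "nat set" where finG: "finite G"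
    and Gp: "\<forall>j\<in>G. (\<forall>i. u j $ i < v j $ i) \<and> a j > 0 \<and> (\<forall>x\<in>box (u j) (v j). ext0 f x = a j)"
    and ord: "\<forall>j\<in>G. \<forall>j'\<in>G. j < j' \<longrightarrow> (\<forall>i. (v j :: real^'d) $ i \<le> u j' $ i)"
    and J: "Jfun f \<gamma> \<le> (\<Sum>j\<in>G. (a j * (\<Prod>i\<in>UNIV. v j $ i - u j $ i)) powr (1 / real CARD('d)))"
    using geom[OF adm L pc fnn] by blast
  have cpos: "c > 0" using cd unfolding is_cd_def by simp
  define d where "d = real CARD('d)"
  define q where "q j = a j * (\<Prod>i\<in>UNIV. v j $ i - u j $ i)" for j
  define ln where "ln \<omega> j n = real n powr (-1/d) * real (lchain ((\<lambda>i. X i \<omega>) ` {..<n} \<inter> box (u j) (v j)))" for \<omega> j n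
  have AEb: "AE \<omega> in M. \<forall>j\<in>G. \<forall>y < c * q j powr (1/d). eventually (\<lambda>n. y < ln \<omega> j n) sequentially"
  proof (rule AE_finite_allI[OF finG])
    fix j assume j: "j \<in> G"
    show "AE \<omega> in M. \<forall>y < c * q j powr (1/d). eventually (\<lambda>n. y < ln \<omega> j n) sequentially"
      using box_main[OF M ind dis cd, of "u j" "v j" "a j"] Gp j unfolding q_def ln_def d_def by auto
  qed
  then show ?thesis
  proof (rule AE_mp, intro AE_I2 impI)
    fix \<omega> assume hyp: "\<forall>j\<in>G. \<forall>y < c * q j powr (1/d). eventually (\<lambda>n. y < ln \<omega> j n) sequentially"
    define tot where "tot n = real n powr (- 1 / real CARD('d)) * real (lchain ((\<lambda>i. X i \<omega>) ` {..<n}))" for n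
    have sup: "(\<Sum>j\<in>G. ln \<omega> j n) \<le> tot n" for n
    proof -
      have "(\<Sum>j\<in>G. lchain ((\<lambda>i. X i \<omega>) ` {..<n} \<inter> box (u j) (v j))) \<le> lchain ((\<lambda>i. X i \<omega>) ` {..<n})"
      proof (rule lchain_superadd[OF _ finG])
        fix j j' x y assume jj: "j \<in> G" "j' \<in> G" "j < j'"
          and x: "x \<in> (\<lambda>i. X i \<omega>) ` {..<n} \<inter> box (u j) (v j)" and y: "y \<in> (\<lambda>i. X i \<omega>) ` {..<n} \<inter> box (u j') (v j')"
        show "leqq x y" unfolding leqq_def
        proof
          fix i
          have "x $ i < v j $ i" "u j' $ i < y $ i" using x y by (auto simp: mem_box_cart)
          moreover have "v j $ i \<le> u j' $ i" using ord jj by blast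
          ultimately show "x $ i \<le> y $ i" by simp
        qed
      next
        fix j j' assume jj: "j \<in> G" "j' \<in> G" "j \<noteq> j'"
        show "(\<lambda>i. X i \<omega>) ` {..<n} \<inter> box (u j) (v j) \<inter> ((\<lambda>i. X i \<omega>) ` {..<n} \<inter> box (u j') (v j')) = {}"
        proof (rule ccontr)
          assume "(\<lambda>i. X i \<omega>) ` {..<n} \<inter> box (u j) (v j) \<inter> ((\<lambda>i. X i \<omega>) ` {..<n} \<inter> box (u j') (v j')) \<noteq> {}"
          then obtain x where x: "x \<in> box (u j) (v j)" "x \<in> box (u j') (v j')" by blast
          fix i :: 'd
          have "j < j' \<or> j' < j" using jj by arith
          then show False
          proof
            assume "j < j'"
            then have "v j $ i \<le> u j' $ i" using ord jj by blast
            moreover have "x $ i < v j $ i" "u j' $ i < x $ i" using x by (auto simp: mem_box_cart)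
            ultimately show False by simp
          next
            assume "j' < j"
            then have "v j' $ i \<le> u j $ i" using ord jj by blast
            moreover have "x $ i < v j' $ i" "u j $ i < x $ i" using x by (auto simp: mem_box_cart)
            ultimately show False by simp
          qed
        qed
      qed auto
      then have "real (\<Sum>j\<in>G. lchain ((\<lambda>i. X i \<omega>) ` {..<n} \<inter> box (u j) (v j))) \<le> real (lchain ((\<lambda>i. X i \<omega>) ` {..<n}))"
        by linarith
      then have "real n powr (-1/d) * (\<Sum>j\<in>G. real (lchain ((\<lambda>i. X i \<omega>) ` {..<n} \<inter> box (u j) (v j))))
                 \<le> real n powr (-1/d) * real (lchain ((\<lambda>i. X i \<omega>) ` {..<n}))"
        by (intro mult_left_mono) auto
      then show ?thesis unfolding ln_def tot_def d_def by (simp add: sum_distrib_left)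
    qed
    have lnn: "0 \<le> ln \<omega> j n" for j n unfolding ln_def by simp
    define S where "S = (\<Sum>j\<in>G. c * q j powr (1/d))"
    have cJS: "c * Jfun f \<gamma> \<le> S"
    proof -
      have "c * Jfun f \<gamma> \<le> c * (\<Sum>j\<in>G. q j powr (1/d))"
        using J cpos unfolding q_def d_def by (intro mult_left_mono) auto
      then show ?thesis unfolding S_def by (simp add: sum_distrib_left)
    qed
    show "ereal (c * Jfun f \<gamma>) \<le> liminf (\<lambda>n. ereal (tot n))"
      unfolding tot_def[symmetric]
    proof (subst le_Liminf_iff, intro allI impI)
      fix y :: ereal assume y: "y < ereal (c * Jfun f \<gamma>)"
      show "eventually (\<lambda>n. y < ereal (tot n)) sequentially"
      proof (cases y)
        case MInf then show ?thesis by simp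
      next
        case PInf then show ?thesis using y by simp
      next
        case (real y')
        have y': "y' < S" using y cJS real by simp
        define m where "m = card G"
        define \<delta> where "\<delta> = (S - y') / (real m + 1)"
        have dpos: "\<delta> > 0" unfolding \<delta>_def using y' by simp
        have ev: "eventually (\<lambda>n. \<forall>j\<in>G. c * q j powr (1/d) - \<delta> < ln \<omega> j n) sequentially"
          using hyp dpos by (intro eventually_ball_finite[OF finG]) auto
        show ?thesis using ev
        proof eventually_elim
          case (elim n)
          have "(\<Sum>j\<in>G. (c * q j powr (1/d) - \<delta>)) \<le> (\<Sum>j\<in>G. ln \<omega> j n)"
            using elim by (intro sum_mono) (auto simp: less_imp_le)
          moreover have "(\<Sum>j\<in>G. (c * q j powr (1/d) - \<delta>)) = S - real m * \<delta>"
            unfolding S_def m_def by (simp add: sum_subtractf)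
          moreover have "y' < S - real m * \<delta>"
          proof -
            have "real m * \<delta> < S - y'"
              unfolding \<delta>_def using y' by (simp add: field_simps)
            then show ?thesis by simp
          qed
          ultimately have "y' < tot n" using sup[of n] by linarith
          then show ?case using real by simp
        qed
      qed
    qed
  qed
qed


lemma admissible_linear: "admissible (\<lambda>t::real. t *\<^sub>R (1::real^'d))"
proof -
  have hd: "((\<lambda>t::real. t *\<^sub>R (1::real^'d)) has_vector_derivative 1) (at t within S)" for t S
    unfolding has_vector_derivative_def
    by (rule bounded_linear_imp_has_derivative) (rule bounded_linear_scaleR_left)
  have vd: "vector_derivative (\<lambda>t::real. t *\<^sub>R (1::real^'d)) (at t within {0..1}) = 1" if "t \<in> {0..1}" for t
    by (rule vector_derivative_within_closed_interval[OF _ that hd]) simp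
  have h1: "\<forall>t\<in>{0..1}. (\<lambda>t. t *\<^sub>R (1::real^'d)) differentiable at t within {0..1}"
    using differentiableI[OF hd[unfolded has_vector_derivative_def]] by blast
  have h2: "continuous_on {0..1} (\<lambda>t. vector_derivative (\<lambda>t. t *\<^sub>R (1::real^'d)) (at t within {0..1}))"
    by (rule continuous_on_eq[OF continuous_on_const]) (simp add: vd)
  have h3: "\<forall>t\<in>{0..1}. (\<forall>i. 0 \<le> vector_derivative (\<lambda>t. t *\<^sub>R (1::real^'d)) (at t within {0..1}) $ i) \<and>
          vector_derivative (\<lambda>t. t *\<^sub>R (1::real^'d)) (at t within {0..1}) \<noteq> 0"
    using vd by simp
  show ?thesis unfolding admissible_def using h1 h2 h3 by blast
qed

theorem theorem3p1:
  fixes M :: "'a measure" and X :: "nat \<Rightarrow> 'a \<Rightarrow> real^'d"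
    and f :: "real^'d \<Rightarrow> real" and L :: nat and c :: real
  assumes "CARD('d) \<ge> 2"
    and "L \<ge> 1"
    and "\<forall>x\<in>unit_cube. f x \<ge> 0"
    and "piecewise_const L f"
    and "(\<integral>\<^sup>+ x. ennreal (ext0 f x) \<partial>lborel) = 1"
    and "prob_space M"
    and "prob_space.indep_vars M (\<lambda>_. borel) X UNIV"
    and "\<And>i. distributed M lborel (X i) (\<lambda>x. ennreal (ext0 f x))"
    and "is_cd TYPE('d) c"
  shows "AE \<omega> in M. liminf (\<lambda>n. ereal (real n powr (- 1 / real CARD('d)) *
                      real (lchain ((\<lambda>i. X i \<omega>) ` {..<n}))))
                   \<ge> ereal (c * Jbar f)"
proof -
  note per = per_gamma[OF assms(2,3,4,6,7,8,9)]
  have cpos: "c > 0" using assms(9) unfolding is_cd_def by simp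
  define Sg where "Sg = Jfun f ` {\<gamma>::real \<Rightarrow> real^'d. admissible \<gamma>}"
  have Jb: "Jbar f = Sup Sg" unfolding Jbar_def Sg_def by simp
  have Sne: "Sg \<noteq> {}" unfolding Sg_def using admissible_linear by blast
  have ex: "\<exists>\<gamma>. admissible \<gamma> \<and> c * Jbar f - 1 / real (Suc m) < c * Jfun f \<gamma>" for m
  proof (cases "bdd_above Sg")
    case True
    have "Jbar f - 1 / (real (Suc m) * c) < Sup Sg" using Jb cpos by simp
    then obtain s where s: "s \<in> Sg" "Jbar f - 1 / (real (Suc m) * c) < s"
      using less_cSup_iff[OF Sne True] by blast
    then obtain \<gamma> where g: "admissible \<gamma>" "s = Jfun f \<gamma>" unfolding Sg_def by blast
    have "c * (Jbar f - 1 / (real (Suc m) * c)) < c * s" using s(2) cpos by simp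
    then have "c * Jbar f - 1 / real (Suc m) < c * s" using cpos by (simp add: right_diff_distrib)
    then show ?thesis using g by blast
  next
    case False
    then have "\<not> (\<forall>x\<in>Sg. x \<le> Jbar f)" unfolding bdd_above_def by blast
    then obtain s where s: "s \<in> Sg" "Jbar f < s" by (auto simp: not_le)
    then obtain \<gamma> where g: "admissible \<gamma>" "s = Jfun f \<gamma>" unfolding Sg_def by blast
    have "c * Jbar f < c * s" using s(2) cpos by simp
    moreover have "0 < 1 / real (Suc m)" by simp
    ultimately have "c * Jbar f - 1 / real (Suc m) < c * s" by linarith
    then have "c * Jbar f - 1 / real (Suc m) < c * Jfun f \<gamma>" using g(2) by simp
    then show ?thesis using g(1) by blast
  qed
  have "\<forall>m. \<exists>\<gamma>. admissible \<gamma> \<and> c * Jbar f - 1 / real (Suc m) < c * Jfun f \<gamma>" using ex by blast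
  then obtain \<Gamma> where \<Gamma>0: "\<forall>m. admissible (\<Gamma> m) \<and> c * Jbar f - 1 / real (Suc m) < c * Jfun f (\<Gamma> m)"
    by (rule choice[THEN exE])
  have \<Gamma>: "\<And>m. admissible (\<Gamma> m)" "\<And>m. c * Jbar f - 1 / real (Suc m) < c * Jfun f (\<Gamma> m)"
    using \<Gamma>0 by auto
  have "AE \<omega> in M. \<forall>m. liminf (\<lambda>n. ereal (real n powr (- 1 / real CARD('d)) *
                      real (lchain ((\<lambda>i. X i \<omega>) ` {..<n})))) \<ge> ereal (c * Jfun f (\<Gamma> m))"
    by (rule AE_all_countable[THEN iffD2], intro allI, rule per[OF \<Gamma>(1)])
  then show ?thesis
  proof (rule AE_mp, intro AE_I2 impI)
    fix \<omega>
    define g where "g n = ereal (real n powr (- 1 / real CARD('d)) * real (lchain ((\<lambda>i. X i \<omega>) ` {..<n})))" for n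
    assume "\<forall>m. liminf (\<lambda>n. ereal (real n powr (- 1 / real CARD('d)) * real (lchain ((\<lambda>i. X i \<omega>) ` {..<n})))) \<ge> ereal (c * Jfun f (\<Gamma> m))"
    then have lm: "\<forall>m. liminf g \<ge> ereal (c * Jfun f (\<Gamma> m))" unfolding g_def by simp
    have "ereal (c * Jbar f) \<le> liminf g"
    proof (subst le_Liminf_iff, intro allI impI)
      fix y :: ereal assume y: "y < ereal (c * Jbar f)"
      show "eventually (\<lambda>n. y < g n) sequentially"
      proof (cases y)
        case MInf then show ?thesis by (simp add: g_def)
      next
        case PInf then show ?thesis using y by simp
      next
        case (real y')
        have "0 < c * Jbar f - y'" using y real by simp
        then obtain m where m: "inverse (real (Suc m)) < c * Jbar f - y'" using reals_Archimedean by blast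
        have "y < ereal (c * Jfun f (\<Gamma> m))" using m \<Gamma>(2)[of m] real by (simp add: inverse_eq_divide)
        also have "\<dots> \<le> liminf g" using lm by blast
        finally have "y < liminf g" .
        moreover have "\<forall>y<liminf g. eventually (\<lambda>n. y < g n) sequentially"
          using le_Liminf_iff[of "liminf g" sequentially g] by simp
        ultimately show ?thesis by blast
      qed
    qed
    then show "ereal (c * Jbar f) \<le> liminf (\<lambda>n. ereal (real n powr (- 1 / real CARD('d)) * real (lchain ((\<lambda>i. X i \<omega>) ` {..<n}))))"
      unfolding g_def by simp
  qed
qed


end
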